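(* Let $t$ be a positive even integer. Then $$\sum_{n\geq1} a_t^{\star}(n)\, q^n=t \cdot \frac{q^{2t}\, (-q;q^2)_{\infty}}{1-q^{2t}},$$ and consequently, for every integer $n\ge 1$, $$a_t^{\star}(n)=t\sum_{j\geq 1} sc(n-2tj)=t\sum_{j\geq 1} q^{\star}(n-2tj).$$
   Context: A partition $\lambda=(\lambda_1\ge\dots\ge\lambda_\ell\ge 1)$ of $n$ has $\sum_i\lambda_i=n$; its Young diagram has $\lambda_i$ left-justified cells in row $i$. The conjugate $\lambda'$ is obtained by reflecting the Young diagram in the main diagonal; $\lambda$ is self-conjugate if $\lambda=\lambda'$, and $\mathcal{SC}$ is the set of self-conjugate partitions. The hook length of the cell $(i,j)$ is the number of cells to its right in row $i$ plus the number below it in column $j$ plus $1$; $n_t(\lambda)$ is the number of cells of $\lambda$ with hook length $t$. Define $a_t^{\star}(n)=\sum_{\lambda\in\mathcal{SC},\,\lambda\vdash n} n_t(\lambda)$. $sc(m)$ is the number of self-conjugate partitions of $m$, $q^{\star}(m)$ is the number of partitions of $m$ into distinct odd parts, with $sc(0)=q^\star(0)=1$ and $sc(m)=q^\star(m)=0$ for $m<0$. $(a;q)_\infty=\prod_{j\ge0}(1-aq^j)$. *)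

theory Defs
  imports "HOL-Analysis.Analysis"
begin

text \<open>A partition is a weakly decreasing list of positive integers
  (\<lambda>_1 \<ge> \<lambda>_2 \<ge> ... \<ge> \<lambda>_l \<ge> 1). Rows and columns are 0-indexed here.\<close>

definition is_partition :: "nat list \<Rightarrow> bool" where
  "is_partition lam \<longleftrightarrow> sorted_wrt (\<ge>) lam \<and> (\<forall>p\<in>set lam. 0 < p)"

definition partitions_of :: "nat \<Rightarrow> nat list set" where
  "partitions_of n = {lam. is_partition lam \<and> sum_list lam = n}"

definition conj_part :: "nat list \<Rightarrow> nat list" where
  "conj_part lam = map (\<lambda>j. length (filter (\<lambda>p. j < p) lam))
      [0..<(if lam = [] then 0 else hd lam)]"

definition self_conjugate :: "nat list \<Rightarrow> bool" where
  "self_conjugate lam \<longleftrightarrow> conj_part lam = lam"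

definition cells :: "nat list \<Rightarrow> (nat \<times> nat) set" where
  "cells lam = {(i, j). i < length lam \<and> j < lam ! i}"

definition hook :: "nat list \<Rightarrow> nat \<times> nat \<Rightarrow> nat" where
  "hook lam c = (case c of (i, j) \<Rightarrow>
      (lam ! i - j - 1) + (conj_part lam ! j - i - 1) + 1)"

definition n_hook :: "nat \<Rightarrow> nat list \<Rightarrow> nat" where
  "n_hook t lam = card {c \<in> cells lam. hook lam c = t}"

definition a_star :: "nat \<Rightarrow> nat \<Rightarrow> nat" where
  "a_star t n = (\<Sum>lam \<in> {lam \<in> partitions_of n. self_conjugate lam}. n_hook t lam)"

definition sc :: "int \<Rightarrow> nat" where
  "sc m = (if m < 0 then 0 else card {lam \<in> partitions_of (nat m). self_conjugate lam})"

definition q_star :: "int \<Rightarrow> nat" where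
  "q_star m = (if m < 0 then 0 else
     card {lam \<in> partitions_of (nat m). sorted_wrt (>) lam \<and> (\<forall>p\<in>set lam. odd p)})"

end

theory Submission
  imports Defs
begin


definition cj :: "(nat \<Rightarrow> nat) \<Rightarrow> nat \<Rightarrow> nat" where
  "cj f j = card {i. j < f i}"
definition bp :: "(nat \<Rightarrow> nat) \<Rightarrow> nat \<Rightarrow> int" where
  "bp f i = int (f i) - int i - 1"
definition MB :: "(nat \<Rightarrow> nat) \<Rightarrow> int set" where
  "MB f = range (bp f)"
definition pfun :: "(nat \<Rightarrow> nat) \<Rightarrow> nat \<Rightarrow> bool" where
  "pfun f L \<longleftrightarrow> (\<forall>i j. i \<le> j \<longrightarrow> f j \<le> f i) \<and> (\<forall>i\<ge>L. f i = 0)"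

lemma downclosed:
  assumes dc: "\<And>i j. i \<le> j \<Longrightarrow> P j \<Longrightarrow> P i" and fin: "finite {i::nat. P i}"
  shows "{i. P i} = {..<card {i. P i}}"
proof -
  have "\<exists>i. \<not> P i" using fin by (metis finite_nat_set_iff_bounded mem_Collect_eq order_less_irrefl)
  define k where "k = (LEAST i. \<not> P i)"
  have nk: "\<not> P k" unfolding k_def using \<open>\<exists>i. \<not> P i\<close> by (rule LeastI_ex)
  have "{i. P i} = {..<k}"
  proof (rule set_eqI, rule iffI)
    fix i assume "i \<in> {i. P i}"
    then show "i \<in> {..<k}" using dc nk by (metis lessThan_iff mem_Collect_eq not_le)
  next
    fix i assume "i \<in> {..<k}"
    then show "i \<in> {i. P i}" unfolding k_def using not_less_Least by auto
  qed
  then show ?thesis by simp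
qed

lemma pfun_fin:
  assumes "pfun f L" shows "finite {i. j < f i}"
proof -
  have "{i. j < f i} \<subseteq> {..<L}" using assms unfolding pfun_def by (auto simp: not_less[symmetric])
  then show ?thesis using finite_subset by blast
qed

lemma pfun_cj_iff:
  assumes "pfun f L" shows "j < f i \<longleftrightarrow> i < cj f j"
proof -
  have "{i. j < f i} = {..<cj f j}" unfolding cj_def
    apply (rule downclosed)
    using assms unfolding pfun_def apply (meson less_le_trans)
    using pfun_fin[OF assms] .
  then show ?thesis by (metis lessThan_iff mem_Collect_eq)
qed

lemma pfun_cj:
  assumes "pfun f L" shows "pfun (cj f) (f 0)"
  unfolding pfun_def
proof safe
  fix i j :: nat assume "i \<le> j"
  then have "{k. j < f k} \<subseteq> {k. i < f k}" by auto
  then show "cj f j \<le> cj f i" unfolding cj_def by (intro card_mono pfun_fin[OF assms])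
next
  fix i assume "f 0 \<le> i"
  then have "{k. i < f k} = {}" using assms unfolding pfun_def by (auto, meson le0 le_trans not_le)
  then show "cj f i = 0" unfolding cj_def by simp
qed

lemma cj0_le:
  assumes "pfun f L" shows "cj f 0 \<le> L"
proof -
  have "{i. 0 < f i} \<subseteq> {..<L}" using assms unfolding pfun_def by (auto simp: not_less[symmetric])
  then show ?thesis unfolding cj_def by (metis card_lessThan card_mono finite_lessThan)
qed

lemma bp_strict: "pfun f L \<Longrightarrow> i < j \<Longrightarrow> bp f j < bp f i"
  unfolding pfun_def bp_def by (smt (verit, best) less_imp_le_nat of_nat_le_iff of_nat_less_iff)

lemma bp_inj: "pfun f L \<Longrightarrow> inj (bp f)"
  by (metis bp_strict injI less_irrefl nat_neq_iff)

lemma bp_le: "pfun f L \<Longrightarrow> bp f i \<le> int (f 0) - 1"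
  unfolding pfun_def bp_def by (smt (verit) le0 of_nat_0_le_iff of_nat_le_iff)

lemma bp_ge: "bp f i \<ge> - int i - 1"
  unfolding bp_def by simp

lemma bp_big: "pfun f L \<Longrightarrow> i \<ge> L \<Longrightarrow> bp f i = - int i - 1"
  unfolding pfun_def bp_def by simp

lemma MB_low: "pfun f L \<Longrightarrow> y \<le> - int L - 1 \<Longrightarrow> y \<in> MB f"
  unfolding MB_def
  apply (rule image_eqI[where x="nat (-y-1)"])
  apply (subst bp_big, assumption) by auto

lemma MB_high: "pfun f L \<Longrightarrow> y \<ge> int (f 0) \<Longrightarrow> y \<notin> MB f"
  unfolding MB_def using bp_le by (smt (verit, best) imageE)

lemma MB_disj:
  assumes "pfun f L" shows "bp (cj f) j \<noteq> - bp f i - 1"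
proof
  assume h: "bp (cj f) j = - bp f i - 1"
  then have "int (cj f j) + int (f i) = int i + int j + 1" unfolding bp_def by simp
  then have e: "cj f j + f i = i + j + 1" by linarith
  show False
  proof (cases "j < f i")
    case True
    then have "i < cj f j" using pfun_cj_iff[OF assms] by simp
    then show False using True e by linarith
  next
    case False
    then have "\<not> i < cj f j" using pfun_cj_iff[OF assms] by simp
    then show False using False e by linarith
  qed
qed

lemma MB_window:
  assumes "pfun f L" and "N \<ge> L" and "N \<ge> f 0"
  shows "MB f \<inter> {-int N..<int N} = bp f ` {..<N}"
proof (rule set_eqI, rule iffI)
  fix y assume "y \<in> MB f \<inter> {-int N..<int N}"
  then obtain i where y: "y = bp f i" "y \<ge> - int N" unfolding MB_def by auto
  have "i < N"
  proof (rule ccontr)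
    assume "\<not> i < N" then have "bp f i = - int i - 1" using bp_big[OF assms(1)] assms by simp
    then show False using y \<open>\<not> i < N\<close> by linarith
  qed
  then show "y \<in> bp f ` {..<N}" using y by auto
next
  fix y assume "y \<in> bp f ` {..<N}"
  then obtain i where "i < N" "y = bp f i" by auto
  moreover have "bp f i \<ge> - int i - 1" by (rule bp_ge)
  moreover have "bp f i \<le> int (f 0) - 1" using bp_le[OF assms(1)] .
  ultimately show "y \<in> MB f \<inter> {-int N..<int N}" using assms unfolding MB_def by auto
qed

lemma card_MB_window:
  assumes "pfun f L" and "N \<ge> L" and "N \<ge> f 0"
  shows "card (MB f \<inter> {-int N..<int N}) = N"
  using MB_window[OF assms] card_image[OF inj_on_subset[OF bp_inj[OF assms(1)]]] by simp

lemma MB_conj: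
  assumes "pfun f L" shows "y \<in> MB (cj f) \<longleftrightarrow> - y - 1 \<notin> MB f"
proof -
  define N where "N = L + f 0"
  have pc: "pfun (cj f) (f 0)" by (rule pfun_cj[OF assms])
  have c0: "cj f 0 \<le> L" by (rule cj0_le[OF assms])
  define W where "W = {-int N..<int N}"
  define A where "A = MB (cj f) \<inter> W"
  define B where "B = (\<lambda>y. - y - 1) ` (MB f \<inter> W)"
  have cA: "card A = N" unfolding A_def W_def by (rule card_MB_window[OF pc]) (use c0 N_def in auto)
  have cB: "card B = N" unfolding B_def W_def
  proof -
    have "card (MB f \<inter> {-int N..<int N}) = N" by (rule card_MB_window[OF assms]) (auto simp: N_def)
    then show "card ((\<lambda>y. - y - 1) ` (MB f \<inter> {-int N..<int N})) = N"
      by (subst card_image) (auto intro: inj_onI)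
  qed
  have AW: "A \<subseteq> W" and BW: "B \<subseteq> W" unfolding A_def B_def W_def by auto
  have disj: "A \<inter> B = {}"
  proof (rule ccontr)
    assume "A \<inter> B \<noteq> {}"
    then obtain x where "x \<in> A" "x \<in> B" by blast
    then obtain i j where "x = bp (cj f) j" "x = - bp f i - 1" unfolding A_def B_def MB_def by blast
    then show False using MB_disj[OF assms, of j i] by simp
  qed
  have cW: "card W = 2 * N" unfolding W_def by simp
  have fW: "finite W" unfolding W_def by simp
  have "card (A \<union> B) = 2 * N"
    using card_Un_disjoint[OF finite_subset[OF AW fW] finite_subset[OF BW fW] disj] cA cB by simp
  have AB: "A \<union> B = W" by (rule card_subset_eq[OF fW]) (use AW BW cW \<open>card (A \<union> B) = 2 * N\<close> in auto)
  show ?thesis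
  proof (cases "y \<in> W")
    case True
    have yB: "y \<in> B \<longleftrightarrow> -y-1 \<in> MB f"
    proof
      assume "y \<in> B" then obtain x where "x \<in> MB f" "y = -x-1" unfolding B_def by auto
      then show "-y-1 \<in> MB f" by simp
    next
      assume "-y-1 \<in> MB f"
      moreover have "-y-1 \<in> W" using True unfolding W_def by simp
      ultimately have "-(-y-1)-1 \<in> B" unfolding B_def by blast
      then show "y \<in> B" by simp
    qed
    have yA: "y \<in> A \<longleftrightarrow> y \<in> MB (cj f)" using True unfolding A_def by simp
    show ?thesis using AB disj yB yA True by blast
  next
    case False
    then have "y < - int N \<or> y \<ge> int N" unfolding W_def by auto
    then show ?thesis
    proof
      assume h: "y < - int N"
      have "y \<in> MB (cj f)" by (rule MB_low[OF pc]) (use h N_def in simp)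
      moreover have "- y - 1 \<notin> MB f" by (rule MB_high[OF assms]) (use h N_def in simp)
      ultimately show ?thesis by simp
    next
      assume h: "y \<ge> int N"
      have "y \<notin> MB (cj f)" by (rule MB_high[OF pc]) (use h c0 N_def in simp)
      moreover have "- y - 1 \<in> MB f" by (rule MB_low[OF assms]) (use h N_def in simp)
      ultimately show ?thesis by simp
    qed
  qed
qed



definition pad :: "nat list \<Rightarrow> nat \<Rightarrow> nat" where
  "pad lam i = (if i < length lam then lam ! i else 0)"

lemma part_nth_mono: "is_partition lam \<Longrightarrow> i \<le> j \<Longrightarrow> j < length lam \<Longrightarrow> lam ! j \<le> lam ! i"
  unfolding is_partition_def by (metis le_eq_less_or_eq order_refl sorted_wrt_iff_nth_less)

lemma part_nth_pos: "is_partition lam \<Longrightarrow> i < length lam \<Longrightarrow> 0 < lam ! i"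
  unfolding is_partition_def by auto

lemma pad_pfun: "is_partition lam \<Longrightarrow> pfun (pad lam) (length lam)"
  unfolding pfun_def pad_def using part_nth_mono by auto

lemma pad_pos: "is_partition lam \<Longrightarrow> 0 < pad lam i \<longleftrightarrow> i < length lam"
  unfolding pad_def using part_nth_pos by auto

lemma pad_0: "pad lam 0 = (if lam = [] then 0 else hd lam)"
  unfolding pad_def by (cases lam) auto

lemma cells_pad: "cells lam = {(i, j). j < pad lam i}"
  unfolding cells_def pad_def by (auto split: if_splits)

lemma conj_nth:
  assumes "j < length (conj_part lam)"
  shows "conj_part lam ! j = cj (pad lam) j"
proof -
  have "conj_part lam ! j = length (filter (\<lambda>p. j < p) lam)"
    using assms unfolding conj_part_def by simp
  also have "\<dots> = card {i. i < length lam \<and> j < lam ! i}" by (rule length_filter_conv_card)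
  also have "{i. i < length lam \<and> j < lam ! i} = {i. j < pad lam i}" unfolding pad_def by auto
  finally show ?thesis unfolding cj_def .
qed

lemma length_conj: "length (conj_part lam) = pad lam 0"
  unfolding conj_part_def pad_0 by simp

lemma pad_conj:
  assumes "is_partition lam" shows "pad (conj_part lam) = cj (pad lam)"
proof
  fix j
  show "pad (conj_part lam) j = cj (pad lam) j"
  proof (cases "j < length (conj_part lam)")
    case True then show ?thesis using conj_nth unfolding pad_def by simp
  next
    case False
    then have "pad lam 0 \<le> j" using length_conj by simp
    then have "cj (pad lam) j = 0" using pfun_cj[OF pad_pfun[OF assms]] unfolding pfun_def by simp
    then show ?thesis using False unfolding pad_def by simp
  qed
qed

lemma conj_partition:
  assumes "is_partition lam" shows "is_partition (conj_part lam)"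
proof -
  have pc: "pfun (cj (pad lam)) (pad lam 0)" by (rule pfun_cj[OF pad_pfun[OF assms]])
  have s: "sorted_wrt (\<ge>) (conj_part lam)"
    unfolding sorted_wrt_iff_nth_less
  proof (intro allI impI)
    fix i j assume "i < j" "j < length (conj_part lam)"
    then show "conj_part lam ! j \<le> conj_part lam ! i"
      using conj_nth pc unfolding pfun_def by simp
  qed
  have p: "\<forall>p\<in>set (conj_part lam). 0 < p"
  proof
    fix p assume "p \<in> set (conj_part lam)"
    then obtain j where j: "j < length (conj_part lam)" "p = conj_part lam ! j"
      by (metis in_set_conv_nth)
    then have "j < pad lam 0" using length_conj by simp
    then have "0 < cj (pad lam) j" using pfun_cj_iff[OF pad_pfun[OF assms], of j 0] by simp
    then show "0 < p" using j conj_nth by simp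
  qed
  show ?thesis using s p unfolding is_partition_def by simp
qed

lemma pad_eq_imp_eq:
  assumes "is_partition lam" "is_partition mu" "pad lam = pad mu"
  shows "lam = mu"
proof -
  have "length lam = length mu"
  proof -
    have "{i. 0 < pad lam i} = {..<length lam}" using pad_pos[OF assms(1)] by auto
    moreover have "{i. 0 < pad mu i} = {..<length mu}" using pad_pos[OF assms(2)] by auto
    ultimately show ?thesis using assms(3) by (metis card_lessThan)
  qed
  moreover have "\<And>i. i < length lam \<Longrightarrow> lam ! i = mu ! i"
    using assms(3) \<open>length lam = length mu\<close> unfolding pad_def by (metis)
  ultimately show ?thesis by (rule nth_equalityI)
qed

lemma sum_list_pad:
  assumes "N \<ge> length lam" shows "sum_list lam = (\<Sum>i<N. pad lam i)"
proof -
  have "sum_list lam = (\<Sum>i<length lam. lam ! i)" by (simp add: sum_list_sum_nth atLeast0LessThan)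
  also have "\<dots> = (\<Sum>i<length lam. pad lam i)" unfolding pad_def by simp
  also have "\<dots> = (\<Sum>i<N. pad lam i)"
    by (rule sum.mono_neutral_left) (use assms in \<open>auto simp: pad_def\<close>)
  finally show ?thesis .
qed

lemma hook_cell:
  assumes "is_partition lam" "j < pad lam i"
  shows "hook lam (i, j) = pad lam i + cj (pad lam) j - i - j - 1"
    and "i < cj (pad lam) j"
proof -
  have ilen: "i < length lam" using assms pad_pos by (metis gr_zeroI not_less0)
  have "j < pad lam 0" using assms pad_pfun[OF assms(1)] unfolding pfun_def
    by (meson le0 less_le_trans)
  then have jc: "j < length (conj_part lam)" using length_conj by simp
  show ic: "i < cj (pad lam) j" using pfun_cj_iff[OF pad_pfun[OF assms(1)]] assms(2) by simp
  show "hook lam (i, j) = pad lam i + cj (pad lam) j - i - j - 1"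
    unfolding hook_def using conj_nth[OF jc] ilen assms(2) ic unfolding pad_def by simp
qed

lemma hook_eq_iff:
  assumes "is_partition lam" "j < pad lam i"
  shows "hook lam (i, j) = t \<longleftrightarrow> bp (cj (pad lam)) j = - (bp (pad lam) i - int t) - 1"
  using hook_cell[OF assms] assms(2) unfolding bp_def by auto

lemma row_count:
  assumes "is_partition lam" "0 < pad lam i"
  shows "card {j. j < pad lam i \<and> hook lam (i, j) = t}
         = (if bp (pad lam) i - int t \<notin> MB (pad lam) then 1 else 0)"
proof -
  let ?f = "pad lam"
  have pf: "pfun ?f (length lam)" by (rule pad_pfun[OF assms(1)])
  define z where "z = - (bp ?f i - int t) - 1"
  have "{j. j < ?f i \<and> hook lam (i, j) = t} = {j. bp (cj ?f) j = z}"
  proof (rule set_eqI, rule iffI)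
    fix j assume "j \<in> {j. j < ?f i \<and> hook lam (i, j) = t}"
    then show "j \<in> {j. bp (cj ?f) j = z}" using hook_eq_iff[OF assms(1)] z_def by auto
  next
    fix j assume h: "j \<in> {j. bp (cj ?f) j = z}"
    have "j < ?f i"
    proof (rule ccontr)
      assume "\<not> j < ?f i"
      then have "\<not> i < cj ?f j" using pfun_cj_iff[OF pf] by simp
      then show False using h \<open>\<not> j < ?f i\<close> unfolding z_def bp_def by simp
    qed
    then show "j \<in> {j. j < ?f i \<and> hook lam (i, j) = t}"
      using hook_eq_iff[OF assms(1)] h z_def by auto
  qed
  also have "card {j. bp (cj ?f) j = z} = (if z \<in> MB (cj ?f) then 1 else 0)"
  proof (cases "z \<in> MB (cj ?f)")
    case True
    then obtain j0 where "bp (cj ?f) j0 = z" unfolding MB_def by auto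
    then have "{j. bp (cj ?f) j = z} = {j0}"
      using bp_inj[OF pfun_cj[OF pf]] by (auto dest: injD)
    then show ?thesis using True by simp
  next
    case False
    then have "{j. bp (cj ?f) j = z} = {}" unfolding MB_def by auto
    then show ?thesis using False by simp
  qed
  also have "z \<in> MB (cj ?f) \<longleftrightarrow> bp ?f i - int t \<notin> MB ?f"
    using MB_conj[OF pf, of z] unfolding z_def by simp
  finally show ?thesis by simp
qed

lemma n_hook_MB:
  assumes "is_partition lam"
  shows "n_hook t lam = card {y \<in> MB (pad lam). y - int t \<notin> MB (pad lam)}"
proof -
  let ?f = "pad lam"
  have pf: "pfun ?f (length lam)" by (rule pad_pfun[OF assms(1)])
  have "{c \<in> cells lam. hook lam c = t} = Sigma {..<length lam} (\<lambda>i. {j. j < ?f i \<and> hook lam (i, j) = t})"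
  proof (rule set_eqI)
    fix c :: "nat \<times> nat"
    obtain i j where c: "c = (i, j)" by fastforce
    have "j < ?f i \<Longrightarrow> i < length lam" using pad_pos[OF assms, of i] by simp
    then show "c \<in> {c \<in> cells lam. hook lam c = t} \<longleftrightarrow> c \<in> Sigma {..<length lam} (\<lambda>i. {j. j < ?f i \<and> hook lam (i, j) = t})"
      unfolding c cells_pad by blast
  qed
  then have "n_hook t lam = (\<Sum>i<length lam. card {j. j < ?f i \<and> hook lam (i, j) = t})"
    unfolding n_hook_def by (simp add: card_SigmaI)
  also have "\<dots> = (\<Sum>i<length lam. (if bp ?f i - int t \<notin> MB ?f then 1 else 0))"
  proof (rule sum.cong[OF refl])
    fix i assume "i \<in> {..<length lam}"
    then have "0 < pad lam i" using pad_pos[OF assms] by simp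
    then show "card {j. j < ?f i \<and> hook lam (i, j) = t} = (if bp ?f i - int t \<notin> MB ?f then 1 else 0)"
      by (rule row_count[OF assms])
  qed
  also have "\<dots> = card {i \<in> {..<length lam}. bp ?f i - int t \<notin> MB ?f}"
    by (simp add: sum.If_cases Int_def)
  also have "{i \<in> {..<length lam}. bp ?f i - int t \<notin> MB ?f} = {i. bp ?f i - int t \<notin> MB ?f}"
  proof -
    have "i < length lam" if "bp ?f i - int t \<notin> MB ?f" for i
    proof (rule ccontr)
      assume "\<not> i < length lam"
      then have "bp ?f i = - int i - 1" "bp ?f (i + t) = - int (i + t) - 1" using bp_big[OF pf] by simp_all
      then have "bp ?f i - int t = bp ?f (i + t)" by simp
      then show False using that unfolding MB_def by (metis rangeI)
    qed
    then show ?thesis by blast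
  qed
  also have "card {i. bp ?f i - int t \<notin> MB ?f} = card (bp ?f ` {i. bp ?f i - int t \<notin> MB ?f})"
    by (rule card_image[symmetric]) (rule inj_on_subset[OF bp_inj[OF pf]], simp)
  also have "bp ?f ` {i. bp ?f i - int t \<notin> MB ?f} = {y \<in> MB ?f. y - int t \<notin> MB ?f}"
    unfolding MB_def by blast
  finally show ?thesis .
qed



definition asym :: "int set \<Rightarrow> bool" where
  "asym B \<longleftrightarrow> (\<forall>y. y \<in> B \<longleftrightarrow> - y - 1 \<notin> B)"
definition MD :: "int set \<Rightarrow> int set" where
  "MD P = {y. (0 \<le> y \<and> y \<in> P) \<or> (y < 0 \<and> - y - 1 \<notin> P)}"
definition posp :: "int set \<Rightarrow> int set" where
  "posp B = {y \<in> B. 0 \<le> y}"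
definition wt :: "int set \<Rightarrow> int" where
  "wt P = (\<Sum>y\<in>P. 2 * y + 1)"
definition DS :: "int \<Rightarrow> int set set" where
  "DS n = {P. finite P \<and> P \<subseteq> {0..} \<and> wt P = n}"

lemma asymD: "asym B \<Longrightarrow> y \<in> B \<longleftrightarrow> - y - 1 \<notin> B"
  unfolding asym_def by blast

lemma asym_MD: "P \<subseteq> {0..} \<Longrightarrow> asym (MD P)"
  unfolding asym_def MD_def by auto

lemma MD_posp: assumes "asym B" shows "MD (posp B) = B"
proof (rule set_eqI)
  fix y
  show "y \<in> MD (posp B) \<longleftrightarrow> y \<in> B"
    using asymD[OF assms, of y] unfolding MD_def posp_def by auto
qed

lemma posp_MD: "P \<subseteq> {0..} \<Longrightarrow> posp (MD P) = P"
  unfolding MD_def posp_def by auto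

lemma MB_inj_aux:
  assumes lt: "bp f i < bp g i" and p1: "pfun f L1" and p2: "pfun g L2" and m: "MB f = MB g"
    and e: "\<And>k. k < i \<Longrightarrow> bp f k = bp g k"
  shows False
proof -
  have "bp g i \<in> MB f" using m unfolding MB_def by auto
  then obtain k where k: "bp f k = bp g i" unfolding MB_def by auto
  show False
  proof (cases "k < i")
    case True
    then have "bp g k = bp g i" using e k by simp
    then show False using bp_strict[OF p2 True] by simp
  next
    case False
    then have "bp f k \<le> bp f i" using bp_strict[OF p1] by (metis le_less not_less)
    then show False using k lt by simp
  qed
qed

lemma MB_inj:
  assumes "pfun f L" "pfun g L'" "MB f = MB g"
  shows "f = g"
proof -
  have "bp f = bp g"
  proof (rule ccontr)
    assume "bp f \<noteq> bp g"
    then have "\<exists>i. bp f i \<noteq> bp g i" by auto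
    define i where "i = (LEAST i. bp f i \<noteq> bp g i)"
    have ne: "bp f i \<noteq> bp g i" unfolding i_def using \<open>\<exists>i. bp f i \<noteq> bp g i\<close> by (rule LeastI_ex)
    have eq: "k < i \<Longrightarrow> bp f k = bp g k" for k unfolding i_def using not_less_Least by blast
    show False
    proof (cases "bp f i < bp g i")
      case True then show False using MB_inj_aux[OF True assms] eq by blast
    next
      case False
      then have lt: "bp g i < bp f i" using ne by simp
      have eq': "k < i \<Longrightarrow> bp g k = bp f k" for k using eq[of k] by simp
      show False using MB_inj_aux[OF lt assms(2,1) assms(3)[symmetric]] eq' by blast
    qed
  qed
  show ?thesis
  proof
    fix i
    have "bp f i = bp g i" using \<open>bp f = bp g\<close> by simp
    then show "f i = g i" unfolding bp_def by simp
  qed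
qed

lemma SC_pad: "is_partition lam \<Longrightarrow> self_conjugate lam \<Longrightarrow> cj (pad lam) = pad lam"
  unfolding self_conjugate_def using pad_conj by metis

lemma SC_asym:
  assumes "is_partition lam" "self_conjugate lam"
  shows "asym (MB (pad lam))"
  unfolding asym_def using MB_conj[OF pad_pfun[OF assms(1)]] SC_pad[OF assms] by metis

lemma int_sum_shift: "(\<Sum>z\<in>{0..<int N}. g z) = (\<Sum>i<N. g (int i))"
proof -
  have "{0..<int N} = int ` {..<N}" by (simp add: image_int_atLeastLessThan lessThan_atLeast0)
  then show ?thesis by (simp add: sum.reindex)
qed

lemma win_split:
  assumes "asym B" "posp B \<subseteq> {0..<int N}"
  shows "B \<inter> {- int N..<int N} = posp B \<union> (\<lambda>z. - z - 1) ` ({0..<int N} - posp B)"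
    and "posp B \<inter> (\<lambda>z. - z - 1) ` ({0..<int N} - posp B) = {}"
proof -
  show "B \<inter> {- int N..<int N} = posp B \<union> (\<lambda>z. - z - 1) ` ({0..<int N} - posp B)"
  proof (rule set_eqI, rule iffI)
    fix y assume y: "y \<in> B \<inter> {- int N..<int N}"
    show "y \<in> posp B \<union> (\<lambda>z. - z - 1) ` ({0..<int N} - posp B)"
    proof (cases "0 \<le> y")
      case True then show ?thesis using y unfolding posp_def by auto
    next
      case False
      then have "-y-1 \<notin> B" using y asymD[OF assms(1), of y] by auto
      then have "-y-1 \<in> {0..<int N} - posp B" using y False unfolding posp_def by auto
      then show ?thesis by (intro UnI2 image_eqI[where x="-y-1"]) auto
    qed
  next
    fix y assume y: "y \<in> posp B \<union> (\<lambda>z. - z - 1) ` ({0..<int N} - posp B)"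
    then show "y \<in> B \<inter> {- int N..<int N}"
    proof
      assume "y \<in> posp B" then show ?thesis using assms(2) unfolding posp_def by auto
    next
      assume "y \<in> (\<lambda>z. - z - 1) ` ({0..<int N} - posp B)"
      then obtain z where z: "y = -z-1" "z \<in> {0..<int N}" "z \<notin> posp B" by auto
      then have "z \<notin> B" unfolding posp_def by auto
      then have "y \<in> B" using asymD[OF assms(1), of y] z by auto
      then show ?thesis using z by auto
    qed
  qed
  show "posp B \<inter> (\<lambda>z. - z - 1) ` ({0..<int N} - posp B) = {}"
    unfolding posp_def by auto
qed

lemma win_sum:
  assumes "asym B" "posp B \<subseteq> {0..<int N}"
  shows "(\<Sum>y\<in>B \<inter> {- int N..<int N}. y) + (\<Sum>i<N. int i + 1) = wt (posp B)"
proof -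
  let ?P = "posp B"
  have fP: "finite ?P" using assms(2) finite_subset by blast
  have "(\<Sum>y\<in>B \<inter> {- int N..<int N}. y) = (\<Sum>y\<in>?P. y) + (\<Sum>y\<in>(\<lambda>z. - z - 1) ` ({0..<int N} - ?P). y)"
    unfolding win_split(1)[OF assms] by (rule sum.union_disjoint) (use fP win_split(2)[OF assms] in auto)
  also have "(\<Sum>y\<in>(\<lambda>z. - z - 1) ` ({0..<int N} - ?P). y) = (\<Sum>z\<in>{0..<int N} - ?P. - z - 1)"
    by (subst sum.reindex) (auto intro: inj_onI)
  also have "\<dots> = (\<Sum>z\<in>{0..<int N}. - z - 1) - (\<Sum>z\<in>?P. - z - 1)"
    by (rule sum_diff) (use assms(2) in auto)
  also have "(\<Sum>z\<in>{0..<int N}. - z - 1) = - (\<Sum>i<N. int i + 1)"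
  proof -
    have "(\<Sum>z\<in>{0..<int N}. - z - 1) = (\<Sum>i<N. - (int i + 1))" 
      by (subst int_sum_shift) (rule sum.cong, auto)
    also have "\<dots> = - (\<Sum>i<N. int i + 1)" by (rule sum_negf)
    finally show ?thesis .
  qed
  finally have "(\<Sum>y\<in>B \<inter> {- int N..<int N}. y) = (\<Sum>y\<in>?P. y) - (\<Sum>i<N. int i + 1) - (\<Sum>z\<in>?P. - z - 1)"
    by simp
  moreover have "(\<Sum>y\<in>?P. y) - (\<Sum>z\<in>?P. - z - 1) = wt ?P"
    unfolding wt_def by (simp add: sum_subtractf[symmetric] algebra_simps)
  ultimately show ?thesis by simp
qed

lemma SC_weight:
  assumes "is_partition lam" "self_conjugate lam"
  shows "wt (posp (MB (pad lam))) = int (sum_list lam)"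
proof -
  let ?f = "pad lam"
  define N where "N = length lam + ?f 0"
  have pf: "pfun ?f (length lam)" by (rule pad_pfun[OF assms(1)])
  have as: "asym (MB ?f)" by (rule SC_asym[OF assms])
  have pp: "posp (MB ?f) \<subseteq> {0..<int N}"
  proof
    fix y assume "y \<in> posp (MB ?f)"
    then have y: "y \<in> MB ?f" "0 \<le> y" unfolding posp_def by auto
    then have "y < int (?f 0)" using MB_high[OF pf, of y] by linarith
    then show "y \<in> {0..<int N}" using y N_def by simp
  qed
  have "MB ?f \<inter> {-int N..<int N} = bp ?f ` {..<N}" by (rule MB_window[OF pf]) (auto simp: N_def)
  then have "(\<Sum>y\<in>MB ?f \<inter> {- int N..<int N}. y) = (\<Sum>i<N. bp ?f i)"
    by (simp add: sum.reindex inj_on_subset[OF bp_inj[OF pf]])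
  also have "\<dots> = (\<Sum>i<N. int (?f i)) - (\<Sum>i<N. int i + 1)"
    unfolding bp_def by (simp add: sum_subtractf[symmetric] algebra_simps)
  also have "(\<Sum>i<N. int (?f i)) = int (sum_list lam)" using sum_list_pad[of lam N] N_def by simp
  finally show ?thesis using win_sum[OF as pp] by simp
qed



lemma pfun_to_list:
  assumes "pfun f L" shows "\<exists>lam. is_partition lam \<and> pad lam = f"
proof -
  define k where "k = card {i. 0 < f i}"
  have fin: "finite {i. 0 < f i}" using pfun_fin[OF assms, of 0] .
  have K: "{i. 0 < f i} = {..<k}" unfolding k_def
    by (rule downclosed) (use assms fin in \<open>auto simp: pfun_def intro: less_le_trans\<close>)
  have Kiff: "0 < f i \<longleftrightarrow> i < k" for i using K by blast
  define lam where "lam = map f [0..<k]"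
  have len: "length lam = k" unfolding lam_def by simp
  have nth: "i < k \<Longrightarrow> lam ! i = f i" for i unfolding lam_def by simp
  have "sorted_wrt (\<ge>) lam"
    unfolding sorted_wrt_iff_nth_less len
    using nth assms unfolding pfun_def by (simp add: less_imp_le)
  moreover have "\<forall>p\<in>set lam. 0 < p" unfolding lam_def using Kiff by auto
  ultimately have "is_partition lam" unfolding is_partition_def by simp
  moreover have "pad lam = f"
  proof
    fix i show "pad lam i = f i" unfolding pad_def len using nth Kiff by (cases "i < k") auto
  qed
  ultimately show ?thesis by blast
qed

lemma sorted_gap:
  fixes xs :: "int list"
  assumes "sorted_wrt (>) xs" "i \<le> j" "j < length xs"
  shows "xs ! j + int (j - i) \<le> xs ! i"
  using assms(2,3)
proof (induction j)
  case 0 then show ?case by simp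
next
  case (Suc j)
  show ?case
  proof (cases "i = Suc j")
    case True then show ?thesis by simp
  next
    case False
    then have ij: "i \<le> j" using Suc.prems by simp
    have "xs ! Suc j < xs ! j" using assms(1) Suc.prems unfolding sorted_wrt_iff_nth_less by simp
    moreover have "xs ! j + int (j - i) \<le> xs ! i" using Suc.IH ij Suc.prems by simp
    ultimately show ?thesis using ij by simp
  qed
qed

lemma asym_realize:
  assumes as: "asym B" and pp: "posp B \<subseteq> {0..<int N}"
  shows "\<exists>f. pfun f N \<and> MB f = B"
proof -
  define S where "S = B \<inter> {- int N..<int N}"
  have fP: "finite (posp B)" using pp finite_subset by blast
  have cS: "card S = N"
  proof -
    have le: "card (posp B) \<le> N" using card_mono[OF _ pp] by simp
    have "card S = card (posp B) + card ((\<lambda>z. - z - 1) ` ({0..<int N} - posp B))"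
      unfolding S_def win_split(1)[OF as pp]
      by (rule card_Un_disjoint) (use fP win_split(2)[OF as pp] in auto)
    also have "card ((\<lambda>z. - z - 1) ` ({0..<int N} - posp B)) = card ({0..<int N} - posp B)"
      by (rule card_image) (auto intro: inj_onI)
    also have "\<dots> = N - card (posp B)"
      using card_Diff_subset[OF fP pp] by simp
    finally show ?thesis using le by simp
  qed
  have fS: "finite S" unfolding S_def by simp
  define xs where "xs = rev (sorted_list_of_set S)"
  have setxs: "set xs = S" unfolding xs_def using fS by simp
  have lenxs: "length xs = N" unfolding xs_def using cS fS by simp
  have sxs: "sorted_wrt (>) xs" unfolding xs_def sorted_wrt_rev
    using strict_sorted_list_of_set[of S] by (simp add: strict_sorted_iff)
  have xsS: "i < N \<Longrightarrow> xs ! i \<in> S" for i using setxs lenxs nth_mem by blast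
  have lb: "xs ! i \<ge> - int i - 1" if "i < N" for i
  proof -
    have "xs ! (N - 1) \<in> S" using xsS that by simp
    then have "xs ! (N - 1) \<ge> - int N" unfolding S_def by simp
    moreover have "xs ! (N - 1) + int (N - 1 - i) \<le> xs ! i"
      by (rule sorted_gap[OF sxs]) (use that lenxs in auto)
    ultimately show ?thesis using that by simp
  qed
  define f where "f i = (if i < N then nat (xs ! i + int i + 1) else 0)" for i
  have bpf: "i < N \<Longrightarrow> bp f i = xs ! i" for i unfolding bp_def f_def using lb[of i] by simp
  have pf: "pfun f N"
    unfolding pfun_def
  proof (intro conjI allI impI)
    fix i j :: nat assume ij: "i \<le> j"
    show "f j \<le> f i"
    proof (cases "j < N")
      case True
      have "xs ! j + int (j - i) \<le> xs ! i" by (rule sorted_gap[OF sxs ij]) (use True lenxs in simp)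
      then show ?thesis unfolding f_def using True ij by simp
    next
      case False then show ?thesis unfolding f_def by simp
    qed
  next
    fix i :: nat assume "N \<le> i" then show "f i = 0" unfolding f_def by simp
  qed
  have "MB f = B"
  proof (rule set_eqI, rule iffI)
    fix y assume "y \<in> MB f"
    then obtain i where y: "y = bp f i" unfolding MB_def by auto
    show "y \<in> B"
    proof (cases "i < N")
      case True then show ?thesis using y bpf xsS unfolding S_def by simp
    next
      case False
      then have yv: "y = - int i - 1" using y bp_big[OF pf] by simp
      have "int i \<notin> B"
      proof
        assume "int i \<in> B" then have "int i \<in> posp B" unfolding posp_def by simp
        then show False using pp False by auto
      qed
      then show ?thesis using asymD[OF as, of y] yv by simp
    qed
  next
    fix y assume yB: "y \<in> B"
    show "y \<in> MB f"
    proof (cases "y < - int N")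
      case True
      show ?thesis by (rule MB_low[OF pf]) (use True in simp)
    next
      case False
      have "y < int N"
      proof (rule ccontr)
        assume "\<not> y < int N" then have "y \<in> posp B" using yB unfolding posp_def by simp
        then show False using pp \<open>\<not> y < int N\<close> by auto
      qed
      then have "y \<in> S" using yB False unfolding S_def by simp
      then obtain i where "i < N" "y = xs ! i" using setxs lenxs by (metis in_set_conv_nth)
      then show ?thesis using bpf[of i] unfolding MB_def by (metis rangeI)
    qed
  qed
  then show ?thesis using pf by blast
qed

definition SCset :: "nat \<Rightarrow> nat list set" where
  "SCset n = {lam \<in> partitions_of n. self_conjugate lam}"

definition Dof :: "nat list \<Rightarrow> int set" where
  "Dof lam = posp (MB (pad lam))"

lemma wt_nonneg: "P \<subseteq> {0..} \<Longrightarrow> 0 \<le> wt P"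
  unfolding wt_def by (rule sum_nonneg) auto

lemma DS_bound:
  assumes "P \<in> DS n" shows "P \<subseteq> {0..<n}"
proof
  fix y assume y: "y \<in> P"
  have "finite P" "P \<subseteq> {0..}" "wt P = n" using assms unfolding DS_def by auto
  have "2 * y + 1 \<le> (\<Sum>z\<in>P. 2 * z + 1)"
  proof (rule member_le_sum[OF y _ \<open>finite P\<close>])
    fix x assume "x \<in> P - {y}" then have "0 \<le> x" using \<open>P \<subseteq> {0..}\<close> by auto
    then show "0 \<le> 2 * x + 1" by simp
  qed
  then have "2 * y + 1 \<le> n" using \<open>wt P = n\<close> unfolding wt_def by simp
  moreover have "0 \<le> y" using y \<open>P \<subseteq> {0..}\<close> by auto
  ultimately show "y \<in> {0..<n}" by simp
qed

lemma DS_neg: assumes "n < 0" shows "DS n = {}"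
proof -
  have "P \<notin> DS n" for P using wt_nonneg[of P] assms unfolding DS_def by auto
  then show ?thesis by blast
qed

lemma Dof_props:
  assumes "lam \<in> SCset n"
  shows "Dof lam \<in> DS (int n)" and "MD (Dof lam) = MB (pad lam)"
proof -
  have p: "is_partition lam" "self_conjugate lam" "sum_list lam = n"
    using assms unfolding SCset_def partitions_of_def by auto
  have pf: "pfun (pad lam) (length lam)" by (rule pad_pfun[OF p(1)])
  have "Dof lam \<subseteq> {0..<int (pad lam 0)}"
  proof
    fix y assume "y \<in> Dof lam"
    then have y: "y \<in> MB (pad lam)" "0 \<le> y" unfolding Dof_def posp_def by auto
    then have "y < int (pad lam 0)" using MB_high[OF pf, of y] by linarith
    then show "y \<in> {0..<int (pad lam 0)}" using y by simp
  qed
  then have "finite (Dof lam)" "Dof lam \<subseteq> {0..}" using finite_subset by auto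
  moreover have "wt (Dof lam) = int n" unfolding Dof_def using SC_weight[OF p(1,2)] p(3) by simp
  ultimately show "Dof lam \<in> DS (int n)" unfolding DS_def by simp
  show "MD (Dof lam) = MB (pad lam)" unfolding Dof_def by (rule MD_posp[OF SC_asym[OF p(1,2)]])
qed

lemma Dof_bij: "bij_betw Dof (SCset n) (DS (int n))"
proof (rule bij_betw_imageI)
  show "inj_on Dof (SCset n)"
  proof (rule inj_onI)
    fix l1 l2 assume l: "l1 \<in> SCset n" "l2 \<in> SCset n" "Dof l1 = Dof l2"
    have p1: "is_partition l1" and p2: "is_partition l2" using l unfolding SCset_def partitions_of_def by auto
    have "MB (pad l1) = MB (pad l2)" using Dof_props(2)[OF l(1)] Dof_props(2)[OF l(2)] l(3) by simp
    then have "pad l1 = pad l2" using MB_inj[OF pad_pfun[OF p1] pad_pfun[OF p2]] by simp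
    then show "l1 = l2" using pad_eq_imp_eq[OF p1 p2] by simp
  qed
next
  show "Dof ` SCset n = DS (int n)"
  proof (rule set_eqI, rule iffI)
    fix D assume "D \<in> Dof ` SCset n" then show "D \<in> DS (int n)" using Dof_props(1) by auto
  next
    fix D assume D: "D \<in> DS (int n)"
    have Dpos: "D \<subseteq> {0..}" and wD: "wt D = int n" using D unfolding DS_def by auto
    have as: "asym (MD D)" by (rule asym_MD[OF Dpos])
    have pp: "posp (MD D) \<subseteq> {0..<int n}" using posp_MD[OF Dpos] DS_bound[OF D] by simp
    obtain f where f: "pfun f n" "MB f = MD D" using asym_realize[OF as pp] by blast
    obtain lam where lam: "is_partition lam" "pad lam = f" using pfun_to_list[OF f(1)] by blast
    have pc: "is_partition (conj_part lam)" by (rule conj_partition[OF lam(1)])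
    have "MB (pad (conj_part lam)) = MB (pad lam)"
    proof (rule set_eqI)
      fix y
      have "y \<in> MB (pad (conj_part lam)) \<longleftrightarrow> - y - 1 \<notin> MB (pad lam)"
        unfolding pad_conj[OF lam(1)] by (rule MB_conj[OF pad_pfun[OF lam(1)]])
      also have "\<dots> \<longleftrightarrow> y \<in> MB (pad lam)" using asymD[OF as, of y] lam(2) f(2) by simp
      finally show "y \<in> MB (pad (conj_part lam)) \<longleftrightarrow> y \<in> MB (pad lam)" .
    qed
    then have "pad (conj_part lam) = pad lam" using MB_inj[OF pad_pfun[OF pc] pad_pfun[OF lam(1)]] by simp
    then have sc: "self_conjugate lam" unfolding self_conjugate_def using pad_eq_imp_eq[OF pc lam(1)] by simp
    have Dl: "Dof lam = D" unfolding Dof_def using lam(2) f(2) posp_MD[OF Dpos] by simp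
    have "int (sum_list lam) = wt D" using SC_weight[OF lam(1) sc] Dl unfolding Dof_def by simp
    then have "sum_list lam = n" using wD by simp
    then have "lam \<in> SCset n" unfolding SCset_def partitions_of_def using lam(1) sc by simp
    then show "D \<in> Dof ` SCset n" using Dl by blast
  qed
qed

definition hk :: "nat \<Rightarrow> int set \<Rightarrow> int set" where
  "hk t P = {y \<in> MD P. y - int t \<notin> MD P}"

lemma a_star_DS: "a_star t n = (\<Sum>P\<in>DS (int n). card (hk t P))"
proof -
  have "a_star t n = (\<Sum>lam\<in>SCset n. n_hook t lam)" unfolding a_star_def SCset_def ..
  also have "\<dots> = (\<Sum>lam\<in>SCset n. card (hk t (Dof lam)))"
  proof (rule sum.cong[OF refl])
    fix lam assume l: "lam \<in> SCset n"
    then have "is_partition lam" unfolding SCset_def partitions_of_def by auto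
    then show "n_hook t lam = card (hk t (Dof lam))"
      unfolding hk_def Dof_props(2)[OF l] by (rule n_hook_MB)
  qed
  also have "\<dots> = (\<Sum>P\<in>DS (int n). card (hk t P))"
    by (rule sum.reindex_bij_betw[OF Dof_bij])
  finally show ?thesis .
qed

lemma sc_DS: "sc m = card (DS m)"
proof (cases "m < 0")
  case True then show ?thesis unfolding sc_def using DS_neg by simp
next
  case False
  have "sc m = card (SCset (nat m))" unfolding sc_def SCset_def using False by simp
  also have "\<dots> = card (DS (int (nat m)))" by (rule bij_betw_same_card[OF Dof_bij])
  finally show ?thesis using False by simp
qed



definition ad :: "nat \<Rightarrow> int set \<Rightarrow> int set" where
  "ad t P = {y \<in> MD P. y + int t \<notin> MD P}"

definition swp :: "int set \<Rightarrow> int \<Rightarrow> int \<Rightarrow> int set" where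
  "swp B a b = (B - {a, - b - 1}) \<union> {b, - a - 1}"

lemma MD_high: "P \<subseteq> {0..<R} \<Longrightarrow> 0 \<le> R \<Longrightarrow> y \<ge> R \<Longrightarrow> y \<notin> MD P"
  unfolding MD_def by auto

lemma MD_low: "P \<subseteq> {0..<R} \<Longrightarrow> 0 \<le> R \<Longrightarrow> y < - R \<Longrightarrow> y \<in> MD P"
  unfolding MD_def by auto

lemma hk_ad_sub:
  assumes "P \<subseteq> {0..<R}" "0 \<le> R"
  shows "ad t P \<subseteq> {- R - int t..<R}" and "hk t P \<subseteq> {- R..<R + int t}"
proof -
  show "ad t P \<subseteq> {- R - int t..<R}"
  proof
    fix y assume "y \<in> ad t P"
    then have "y \<in> MD P" "y + int t \<notin> MD P" unfolding ad_def by auto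
    then have "y < R" "- R \<le> y + int t" using MD_high[OF assms, of y] MD_low[OF assms, of "y + int t"]
      by (meson not_le)+
    then show "y \<in> {- R - int t..<R}" by simp
  qed
  show "hk t P \<subseteq> {- R..<R + int t}"
  proof
    fix y assume "y \<in> hk t P"
    then have "y \<in> MD P" "y - int t \<notin> MD P" unfolding hk_def by auto
    then have "y < R" "- R \<le> y - int t" using MD_high[OF assms, of y] MD_low[OF assms, of "y - int t"]
      by (meson not_le)+
    then show "y \<in> {- R..<R + int t}" by simp
  qed
qed

lemma int_sum_shift2: "(\<Sum>y\<in>{a..<b}. g (y + c)) = (\<Sum>y\<in>{a + c..<b + c}. (g :: int \<Rightarrow> int) y)"
proof -
  have im: "{a + c..<b + c} = (\<lambda>y. y + c) ` {a..<b}"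
  proof (rule set_eqI, rule iffI)
    fix x assume "x \<in> {a + c..<b + c}"
    then have "x - c \<in> {a..<b}" by simp
    then show "x \<in> (\<lambda>y. y + c) ` {a..<b}" by (rule rev_image_eqI) simp
  qed auto
  have "sum g ((\<lambda>y. y + c) ` {a..<b}) = sum (g \<circ> (\<lambda>y. y + c)) {a..<b}"
    by (rule sum.reindex) (simp add: inj_on_def)
  then show ?thesis unfolding im by simp
qed

lemma card_ad:
  assumes "P \<subseteq> {0..<R}" "0 \<le> R"
  shows "card (ad t P) = card (hk t P) + t"
proof -
  define I where "I = {- R - int t..<R}"
  define X where "X y = (if y \<in> MD P then 1 else 0 :: int)" for y
  define hk' where "hk' = {y. y \<notin> MD P \<and> y + int t \<in> MD P}"
  have "hk t P = (\<lambda>y. y + int t) ` hk'"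
  proof (rule set_eqI, rule iffI)
    fix x assume "x \<in> hk t P" then have "x - int t \<in> hk'" unfolding hk_def hk'_def by simp
    then show "x \<in> (\<lambda>y. y + int t) ` hk'" by (rule rev_image_eqI) simp
  next
    fix x assume "x \<in> (\<lambda>y. y + int t) ` hk'" then show "x \<in> hk t P" unfolding hk_def hk'_def by auto
  qed
  then have c1: "card (hk t P) = card hk'" by (simp add: card_image inj_on_def)
  have adI: "ad t P \<subseteq> I" using hk_ad_sub(1)[OF assms] unfolding I_def .
  have hkI: "hk' \<subseteq> I"
  proof
    fix y assume "y \<in> hk'"
    then have "y \<notin> MD P" "y + int t \<in> MD P" unfolding hk'_def by auto
    then have "y + int t < R" "- R \<le> y" using MD_high[OF assms, of "y + int t"] MD_low[OF assms, of y]
      by (meson not_le)+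
    then show "y \<in> I" unfolding I_def by simp
  qed
  have fI: "finite I" unfolding I_def by simp
  have e1: "int (card (ad t P)) = (\<Sum>y\<in>I. if y \<in> MD P \<and> y + int t \<notin> MD P then 1 else 0)"
  proof -
    have "ad t P = {y \<in> I. y \<in> MD P \<and> y + int t \<notin> MD P}" using adI unfolding ad_def by auto
    then show ?thesis using fI by (simp add: sum.If_cases Int_def)
  qed
  have e2: "int (card hk') = (\<Sum>y\<in>I. if y \<notin> MD P \<and> y + int t \<in> MD P then 1 else 0)"
  proof -
    have "hk' = {y \<in> I. y \<notin> MD P \<and> y + int t \<in> MD P}" using hkI unfolding hk'_def by auto
    then show ?thesis using fI by (simp add: sum.If_cases Int_def)
  qed
  have "int (card (ad t P)) - int (card hk') = (\<Sum>y\<in>I. X y - X (y + int t))"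
    unfolding e1 e2 sum_subtractf[symmetric] X_def by (rule sum.cong) auto
  also have "\<dots> = (\<Sum>y\<in>I. X y) - (\<Sum>y\<in>I. X (y + int t))" by (rule sum_subtractf)
  also have "(\<Sum>y\<in>I. X (y + int t)) = (\<Sum>y\<in>{- R..<R + int t}. X y)"
    unfolding I_def using int_sum_shift2[where g=X and a="- R - int t" and b=R and c="int t"] by simp
  also have "(\<Sum>y\<in>I. X y) = (\<Sum>y\<in>{- R - int t..<- R}. X y) + (\<Sum>y\<in>{- R..<R}. X y)"
  proof -
    have "I = {- R - int t..<- R} \<union> {- R..<R}" unfolding I_def using assms(2) by auto
    then show ?thesis by (simp add: sum.union_disjoint)
  qed
  also have "(\<Sum>y\<in>{- R..<R + int t}. X y) = (\<Sum>y\<in>{- R..<R}. X y) + (\<Sum>y\<in>{R..<R + int t}. X y)"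
  proof -
    have "{- R..<R + int t} = {- R..<R} \<union> {R..<R + int t}" using assms(2) by auto
    then show ?thesis by (simp add: sum.union_disjoint)
  qed
  also have "(\<Sum>y\<in>{- R - int t..<- R}. X y) = (\<Sum>y\<in>{- R - int t..<- R}. 1)"
    by (rule sum.cong) (auto simp: X_def intro!: MD_low[OF assms])
  also have "(\<Sum>y\<in>{R..<R + int t}. X y) = 0"
    by (rule sum.neutral) (auto simp: X_def dest: MD_high[OF assms])
  finally have "int (card (ad t P)) - int (card hk') = int t" by simp
  then show ?thesis using c1 by simp
qed

lemma odd_neq: "2 * (a::int) \<noteq> -1" "- 1 \<noteq> 2 * (a::int)" by presburger+

lemma swp_asym:
  assumes as: "asym B" and a: "a \<in> B" and b: "b \<notin> B" and ab: "a \<noteq> b" "a + b \<noteq> -1"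
  shows "asym (swp B a b)" "b \<in> swp B a b" "a \<notin> swp B a b"
proof -
  have na: "- a - 1 \<notin> B" using asymD[OF as, of a] a by simp
  have nb: "- b - 1 \<in> B" using asymD[OF as, of b] b by simp
  show "asym (swp B a b)" unfolding asym_def
  proof
    fix y
    show "y \<in> swp B a b \<longleftrightarrow> - y - 1 \<notin> swp B a b"
    proof (cases "y \<in> {a, b, - a - 1, - b - 1}")
      case True
      have "a \<noteq> - a - 1" "b \<noteq> - b - 1" "- a - 1 \<noteq> a" "- b - 1 \<noteq> b" by presburger+
      then show ?thesis using True ab unfolding swp_def by auto
    next
      case False
      then have "- y - 1 \<notin> {a, b, - a - 1, - b - 1}" by auto
      then show ?thesis using False asymD[OF as, of y] unfolding swp_def by auto
    qed
  qed
  show "b \<in> swp B a b" unfolding swp_def by simp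
  have "a \<noteq> - a - 1" by presburger
  then show "a \<notin> swp B a b" unfolding swp_def using ab by auto
qed

lemma swp_back:
  assumes as: "asym B" and a: "a \<in> B" and b: "b \<notin> B" and ab: "a \<noteq> b" "a + b \<noteq> -1"
  shows "swp (swp B a b) b a = B"
proof -
  have na: "- a - 1 \<notin> B" using asymD[OF as, of a] a by simp
  have nb: "- b - 1 \<in> B" using asymD[OF as, of b] b by simp
  show ?thesis unfolding swp_def using a b na nb ab by auto
qed

lemma sum_swap4:
  fixes X :: "int set"
  assumes "finite X" "a \<in> X" "c \<in> X" "a \<noteq> c" "b \<notin> X" "d \<notin> X" "b \<noteq> d"
  shows "(\<Sum>y\<in>(X - {a, c}) \<union> {b, d}. y) = (\<Sum>y\<in>X. y) - a - c + b + d"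
proof -
  have "(\<Sum>y\<in>X. y) = a + (\<Sum>y\<in>X - {a}. y)" by (rule sum.remove) (use assms in auto)
  also have "(\<Sum>y\<in>X - {a}. y) = c + (\<Sum>y\<in>X - {a} - {c}. y)" by (rule sum.remove) (use assms in auto)
  finally have "(\<Sum>y\<in>X - {a, c}. y) = (\<Sum>y\<in>X. y) - a - c" by (simp add: Diff_insert2[symmetric] insert_commute)
  moreover have "(X - {a, c}) \<union> {b, d} = insert b (insert d (X - {a, c}))" by auto
  ultimately show ?thesis using assms by simp
qed

lemma move_DS:
  assumes P: "P \<in> DS m" and a: "a \<in> MD P" and b: "b \<notin> MD P" and ab: "a \<noteq> b" "a + b \<noteq> -1"
  shows "posp (swp (MD P) a b) \<in> DS (m + 2 * (b - a))"
    and "MD (posp (swp (MD P) a b)) = swp (MD P) a b"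
proof -
  have Ppos: "P \<subseteq> {0..}" and fP: "finite P" and wP: "wt P = m" using P unfolding DS_def by auto
  have Pm: "P \<subseteq> {0..<m}" by (rule DS_bound[OF P])
  have m0: "0 \<le> m" using wP wt_nonneg[OF Ppos] by simp
  define B where "B = MD P"
  have as: "asym B" unfolding B_def by (rule asym_MD[OF Ppos])
  have aB: "a \<in> B" and bB: "b \<notin> B" using a b B_def by auto
  have as': "asym (swp B a b)" using swp_asym[OF as aB bB ab] by simp
  show MD': "MD (posp (swp (MD P) a b)) = swp (MD P) a b" using MD_posp[OF as'] B_def by simp
  define N where "N = nat (m + \<bar>a\<bar> + \<bar>b\<bar> + 1)"
  have Nv: "int N = m + \<bar>a\<bar> + \<bar>b\<bar> + 1" unfolding N_def using m0 by simp
  define W where "W = {- int N..<int N}"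
  have ppB: "posp B \<subseteq> {0..<int N}" unfolding B_def posp_MD[OF Ppos]
  proof
    fix y assume "y \<in> P" then have "y \<in> {0..<m}" using Pm by auto
    then have "0 \<le> y" "y < m" by auto
    moreover have "y < int N" using Nv abs_ge_zero[of a] abs_ge_zero[of b] \<open>y < m\<close> by linarith
    ultimately show "y \<in> {0..<int N}" by simp
  qed
  have inW: "a \<in> W" "b \<in> W" "- a - 1 \<in> W" "- b - 1 \<in> W" unfolding W_def
    using Nv m0 abs_ge_self[of a] abs_ge_minus_self[of a] abs_ge_self[of b] abs_ge_minus_self[of b] by auto
  have na: "- a - 1 \<notin> B" using asymD[OF as, of a] aB by simp
  have nb: "- b - 1 \<in> B" using asymD[OF as, of b] bB by simp
  have ppB': "posp (swp B a b) \<subseteq> {0..<int N}"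
  proof
    fix y assume "y \<in> posp (swp B a b)"
    then have y: "y \<in> swp B a b" "0 \<le> y" unfolding posp_def by auto
    then have "y \<in> posp B \<or> y = b \<or> y = - a - 1" unfolding swp_def posp_def by auto
    then show "y \<in> {0..<int N}" using ppB inW y unfolding W_def by auto
  qed
  have swW: "swp B a b \<inter> W = ((B \<inter> W) - {a, - b - 1}) \<union> {b, - a - 1}"
    unfolding swp_def using inW by auto
  have "(\<Sum>y\<in>swp B a b \<inter> W. y) = (\<Sum>y\<in>B \<inter> W. y) - a - (- b - 1) + b + (- a - 1)"
    unfolding swW by (rule sum_swap4) (use aB bB na nb inW ab in \<open>auto simp: W_def\<close>)
  then have "wt (posp (swp B a b)) = wt (posp B) + 2 * (b - a)"
    using win_sum[OF as' ppB'] win_sum[OF as ppB] unfolding W_def by simp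
  then have w': "wt (posp (swp B a b)) = m + 2 * (b - a)" unfolding B_def posp_MD[OF Ppos] wP .
  have "finite (posp (swp B a b))" using ppB' finite_subset by blast
  moreover have "posp (swp B a b) \<subseteq> {0..}" unfolding posp_def by auto
  ultimately show "posp (swp (MD P) a b) \<in> DS (m + 2 * (b - a))" using w' unfolding DS_def B_def by simp
qed

lemma finite_DS: "finite (DS n)"
proof -
  have "DS n \<subseteq> Pow {0..<n}" using DS_bound by blast
  then show ?thesis by (rule finite_subset) simp
qed

lemma parity_facts:
  assumes "even t" "0 < t"
  shows "k \<noteq> k - int t" "k + (k - int t) \<noteq> -1" "a \<noteq> a + int t" "a + (a + int t) \<noteq> -1"
proof -
  obtain s where s: "t = 2 * s" using assms(1) by blast
  show "k \<noteq> k - int t" using assms(2) by simp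
  show "k + (k - int t) \<noteq> -1" using s by presburger
  show "a \<noteq> a + int t" using assms(2) by simp
  show "a + (a + int t) \<noteq> -1" using s by presburger
qed

lemma sigma_bij:
  assumes "even t" "0 < t"
  shows "card (Sigma (DS n) (hk t)) = card (Sigma (DS (n - 2 * int t)) (ad t))"
proof (rule bij_betw_same_card)
  let ?phi = "\<lambda>(P, k). (posp (swp (MD P) k (k - int t)), k - int t)"
  let ?psi = "\<lambda>(Q, a). (posp (swp (MD Q) a (a + int t)), a + int t)"
  show "bij_betw ?phi (Sigma (DS n) (hk t)) (Sigma (DS (n - 2 * int t)) (ad t))"
  proof (rule bij_betw_byWitness[where f'="?psi"])
    show "\<forall>x\<in>Sigma (DS n) (hk t). ?psi (?phi x) = x"
    proof
      fix x assume "x \<in> Sigma (DS n) (hk t)"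
      then obtain P k where x: "x = (P, k)" "P \<in> DS n" "k \<in> hk t P" by auto
      then have k: "k \<in> MD P" "k - int t \<notin> MD P" unfolding hk_def by auto
      note pf = parity_facts[OF assms]
      have Ppos: "P \<subseteq> {0..}" using x unfolding DS_def by auto
      have M': "MD (posp (swp (MD P) k (k - int t))) = swp (MD P) k (k - int t)"
        by (rule move_DS(2)[OF x(2) k pf(1,2)])
      have "swp (swp (MD P) k (k - int t)) (k - int t) (k - int t + int t) = MD P"
        using swp_back[OF asym_MD[OF Ppos] k pf(1,2)] by simp
      then show "?psi (?phi x) = x" using x M' posp_MD[OF Ppos] by simp
    qed
    show "\<forall>y\<in>Sigma (DS (n - 2 * int t)) (ad t). ?phi (?psi y) = y"
    proof
      fix y assume "y \<in> Sigma (DS (n - 2 * int t)) (ad t)"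
      then obtain Q a where y: "y = (Q, a)" "Q \<in> DS (n - 2 * int t)" "a \<in> ad t Q" by auto
      then have a: "a \<in> MD Q" "a + int t \<notin> MD Q" unfolding ad_def by auto
      note pf = parity_facts[OF assms]
      have Qpos: "Q \<subseteq> {0..}" using y unfolding DS_def by auto
      have M': "MD (posp (swp (MD Q) a (a + int t))) = swp (MD Q) a (a + int t)"
        by (rule move_DS(2)[OF y(2) a pf(3,4)])
      have "swp (swp (MD Q) a (a + int t)) (a + int t) (a + int t - int t) = MD Q"
        using swp_back[OF asym_MD[OF Qpos] a pf(3,4)] by simp
      then show "?phi (?psi y) = y" using y M' posp_MD[OF Qpos] by simp
    qed
    show "?phi ` Sigma (DS n) (hk t) \<subseteq> Sigma (DS (n - 2 * int t)) (ad t)"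
    proof
      fix z assume "z \<in> ?phi ` Sigma (DS n) (hk t)"
      then obtain P k where z: "z = ?phi (P, k)" "P \<in> DS n" "k \<in> hk t P" by auto
      then have k: "k \<in> MD P" "k - int t \<notin> MD P" unfolding hk_def by auto
      note pf = parity_facts[OF assms]
      have D: "posp (swp (MD P) k (k - int t)) \<in> DS (n + 2 * ((k - int t) - k))"
        by (rule move_DS(1)[OF z(2) k pf(1,2)])
      have M': "MD (posp (swp (MD P) k (k - int t))) = swp (MD P) k (k - int t)"
        by (rule move_DS(2)[OF z(2) k pf(1,2)])
      have "k - int t \<in> ad t (posp (swp (MD P) k (k - int t)))"
        unfolding ad_def M' using swp_asym(2,3)[OF asym_MD k pf(1,2)] z(2) unfolding DS_def by auto
      then show "z \<in> Sigma (DS (n - 2 * int t)) (ad t)" using D z(1) by simp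
    qed
    show "?psi ` Sigma (DS (n - 2 * int t)) (ad t) \<subseteq> Sigma (DS n) (hk t)"
    proof
      fix z assume "z \<in> ?psi ` Sigma (DS (n - 2 * int t)) (ad t)"
      then obtain Q a where z: "z = ?psi (Q, a)" "Q \<in> DS (n - 2 * int t)" "a \<in> ad t Q" by auto
      then have a: "a \<in> MD Q" "a + int t \<notin> MD Q" unfolding ad_def by auto
      note pf = parity_facts[OF assms]
      have D: "posp (swp (MD Q) a (a + int t)) \<in> DS ((n - 2 * int t) + 2 * ((a + int t) - a))"
        by (rule move_DS(1)[OF z(2) a pf(3,4)])
      have M': "MD (posp (swp (MD Q) a (a + int t))) = swp (MD Q) a (a + int t)"
        by (rule move_DS(2)[OF z(2) a pf(3,4)])
      have "a + int t \<in> hk t (posp (swp (MD Q) a (a + int t)))"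
        unfolding hk_def M' using swp_asym(2,3)[OF asym_MD a pf(3,4)] z(2) unfolding DS_def by auto
      then show "z \<in> Sigma (DS n) (hk t)" using D z(1) by simp
    qed
  qed
qed

definition FF :: "nat \<Rightarrow> int \<Rightarrow> nat" where
  "FF t n = (\<Sum>P\<in>DS n. card (hk t P))"

lemma DS_fin_pos: "P \<in> DS n \<Longrightarrow> P \<subseteq> {0..<n} \<and> 0 \<le> n"
  using DS_bound wt_nonneg unfolding DS_def by fastforce

lemma FF_rec:
  assumes "even t" "0 < t"
  shows "FF t n = FF t (n - 2 * int t) + t * card (DS (n - 2 * int t))"
proof -
  have fhk: "finite (hk t P)" if "P \<in> DS m" for P m
  proof -
    have "hk t P \<subseteq> {- m..<m + int t}" using DS_fin_pos[OF that] by (intro hk_ad_sub(2)) auto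
    then show ?thesis by (rule finite_subset) simp
  qed
  have fad: "finite (ad t P)" if "P \<in> DS m" for P m
  proof -
    have "ad t P \<subseteq> {- m - int t..<m}" using DS_fin_pos[OF that] by (intro hk_ad_sub(1)) auto
    then show ?thesis by (rule finite_subset) simp
  qed
  have "FF t n = card (Sigma (DS n) (hk t))"
    unfolding FF_def using finite_DS fhk by (simp add: card_SigmaI)
  also have "\<dots> = card (Sigma (DS (n - 2 * int t)) (ad t))" by (rule sigma_bij[OF assms])
  also have "\<dots> = (\<Sum>Q\<in>DS (n - 2 * int t). card (ad t Q))"
    using finite_DS fad by (simp add: card_SigmaI)
  also have "\<dots> = (\<Sum>Q\<in>DS (n - 2 * int t). card (hk t Q) + t)"
  proof (rule sum.cong[OF refl])
    fix Q assume Q: "Q \<in> DS (n - 2 * int t)"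
    have "Q \<subseteq> {0..<n - 2 * int t}" "0 \<le> n - 2 * int t" using DS_fin_pos[OF Q] by auto
    then show "card (ad t Q) = card (hk t Q) + t" by (rule card_ad)
  qed
  also have "\<dots> = FF t (n - 2 * int t) + t * card (DS (n - 2 * int t))"
    unfolding FF_def by (simp add: sum.distrib)
  finally show ?thesis .
qed

lemma FF_iter:
  assumes "even t" "0 < t"
  shows "FF t n = FF t (n - 2 * int t * int m) + t * (\<Sum>j=1..m. card (DS (n - 2 * int t * int j)))"
proof (induction m)
  case 0 then show ?case by simp
next
  case (Suc m)
  have "FF t (n - 2 * int t * int m) = FF t (n - 2 * int t * int (Suc m)) + t * card (DS (n - 2 * int t * int (Suc m)))"
    using FF_rec[OF assms, of "n - 2 * int t * int m"] by (simp add: algebra_simps)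
  then show ?case using Suc.IH by (simp add: algebra_simps)
qed

lemma FF_neg: "n < 0 \<Longrightarrow> FF t n = 0"
  unfolding FF_def using DS_neg by simp

lemma a_star_formula:
  assumes "even t" "0 < t" "1 \<le> n"
  shows "a_star t n = t * (\<Sum>j=1..n. card (DS (int n - 2 * int t * int j)))"
proof -
  have "a_star t n = FF t (int n)" unfolding FF_def a_star_DS ..
  also have "\<dots> = FF t (int n - 2 * int t * int n) + t * (\<Sum>j=1..n. card (DS (int n - 2 * int t * int j)))"
    by (rule FF_iter[OF assms(1,2)])
  also have "FF t (int n - 2 * int t * int n) = 0"
  proof (rule FF_neg)
    have "int n * 1 < int n * (2 * int t)" using assms by (intro mult_strict_left_mono) auto
    then show "int n - 2 * int t * int n < 0" by (simp add: algebra_simps)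
  qed
  finally show ?thesis by simp
qed



definition QS :: "nat \<Rightarrow> nat list set" where
  "QS m = {lam \<in> partitions_of m. sorted_wrt (>) lam \<and> (\<forall>p\<in>set lam. odd p)}"

definition hh :: "nat \<Rightarrow> int" where "hh p = (int p - 1) div 2"

lemma hh_odd: assumes "odd p" shows "2 * hh p + 1 = int p"
proof -
  obtain k where "p = 2 * k + 1" using assms oddE by blast
  then show ?thesis unfolding hh_def by simp
qed

lemma hh_inj: "inj_on hh {p. odd p}"
  by (rule inj_onI) (metis hh_odd mem_Collect_eq of_nat_eq_iff)

lemma desc_iff: "sorted_wrt (>) xs \<longleftrightarrow> sorted (rev xs) \<and> distinct (xs :: nat list)"
proof -
  have "sorted_wrt (>) xs \<longleftrightarrow> sorted_wrt (<) (rev xs)" by (simp add: sorted_wrt_rev)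
  also have "\<dots> \<longleftrightarrow> sorted (rev xs) \<and> distinct (rev xs)" by (rule strict_sorted_iff)
  finally show ?thesis by simp
qed

lemma strict_desc_unique:
  assumes "sorted_wrt (>) xs" "sorted_wrt (>) ys" "set xs = set ys"
  shows "xs = (ys :: nat list)"
proof -
  have "sorted (rev xs)" "distinct (rev xs)" "sorted (rev ys)" "distinct (rev ys)"
    using assms(1,2) unfolding desc_iff by auto
  then have "rev xs = rev ys" using assms(3) by (intro sorted_distinct_set_unique) auto
  then show ?thesis by simp
qed

lemma QS_bij: "bij_betw (\<lambda>lam. hh ` set lam) (QS m) (DS (int m))"
proof (rule bij_betw_imageI)
  show "inj_on (\<lambda>lam. hh ` set lam) (QS m)"
  proof (rule inj_onI)
    fix l1 l2 assume l: "l1 \<in> QS m" "l2 \<in> QS m" "hh ` set l1 = hh ` set l2"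
    have o: "set l1 \<subseteq> {p. odd p}" "set l2 \<subseteq> {p. odd p}" using l unfolding QS_def by auto
    have "set l1 = set l2" using inj_on_image_eq_iff[OF hh_inj o] l(3) by simp
    then show "l1 = l2" using l unfolding QS_def by (intro strict_desc_unique) auto
  qed
next
  show "(\<lambda>lam. hh ` set lam) ` QS m = DS (int m)"
  proof (rule set_eqI, rule iffI)
    fix D assume "D \<in> (\<lambda>lam. hh ` set lam) ` QS m"
    then obtain lam where lam: "lam \<in> QS m" "D = hh ` set lam" by auto
    have p: "is_partition lam" "sum_list lam = m" "sorted_wrt (>) lam" "\<forall>p\<in>set lam. odd p"
      using lam unfolding QS_def partitions_of_def by auto
    have dis: "distinct lam" using p(3) unfolding desc_iff by simp
    have inj: "inj_on hh (set lam)" using inj_on_subset[OF hh_inj] p(4) by blast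
    have "D \<subseteq> {0..}"
    proof
      fix y assume "y \<in> D"
      then obtain p where "p \<in> set lam" "y = hh p" using lam by auto
      then have "0 < p" "odd p" using p(1,4) unfolding is_partition_def by auto
      then show "y \<in> {0..}" using \<open>y = hh p\<close> hh_odd[of p] by simp
    qed
    moreover have "wt D = int m"
    proof -
      have "wt D = (\<Sum>p\<in>set lam. 2 * hh p + 1)" unfolding wt_def lam(2) using inj by (simp add: sum.reindex)
      also have "\<dots> = (\<Sum>p\<in>set lam. int p)" using p(4) hh_odd by simp
      also have "\<dots> = int (sum_list lam)" using sum_list_distinct_conv_sum_set[OF dis, of id] by simp
      finally show ?thesis using p(2) by simp
    qed
    ultimately show "D \<in> DS (int m)" unfolding DS_def lam(2) by auto
  next
    fix D assume D: "D \<in> DS (int m)"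
    have Dpos: "D \<subseteq> {0..}" and fD: "finite D" and wD: "wt D = int m" using D unfolding DS_def by auto
    define OS where "OS = (\<lambda>y. nat (2 * y + 1)) ` D"
    have injD: "inj_on (\<lambda>y. nat (2 * y + 1)) D" using Dpos by (auto intro!: inj_onI)
    have fO: "finite OS" unfolding OS_def using fD by simp
    define lam where "lam = rev (sorted_list_of_set OS)"
    have setl: "set lam = OS" unfolding lam_def using fO by simp
    have desc: "sorted_wrt (>) lam" unfolding desc_iff lam_def using fO by simp
    have dis: "distinct lam" using desc unfolding desc_iff by simp
    have oddO: "\<forall>p\<in>OS. odd p \<and> 0 < p"
    proof
      fix p assume "p \<in> OS" then obtain y where "y \<in> D" "p = nat (2 * y + 1)" unfolding OS_def by auto
      then show "odd p \<and> 0 < p" using Dpos by (auto simp: even_nat_iff)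
    qed
    have "sorted_wrt (\<ge>) lam" using desc by (rule sorted_wrt_mono_rel[rotated]) simp
    then have part: "is_partition lam" unfolding is_partition_def using oddO setl by simp
    have "int (sum_list lam) = int (\<Sum>p\<in>OS. p)" using sum_list_distinct_conv_sum_set[OF dis, of id] setl by simp
    also have "\<dots> = (\<Sum>p\<in>OS. int p)" by simp
    also have "\<dots> = (\<Sum>y\<in>D. int (nat (2 * y + 1)))" unfolding OS_def using injD by (simp add: sum.reindex)
    also have "\<dots> = wt D" unfolding wt_def using Dpos by (intro sum.cong) auto
    finally have "sum_list lam = m" using wD by simp
    then have "lam \<in> QS m" unfolding QS_def partitions_of_def using part desc oddO setl by simp
    moreover have "hh ` set lam = D"
    proof -
      have "hh ` set lam = (\<lambda>y. hh (nat (2 * y + 1))) ` D" unfolding setl OS_def by (simp add: image_image)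
      also have "\<dots> = id ` D"
      proof (rule image_cong[OF refl])
        fix y assume "y \<in> D" then have "0 \<le> y" using Dpos by auto
        then show "hh (nat (2 * y + 1)) = id y" unfolding hh_def by simp
      qed
      also have "\<dots> = D" by simp
      finally show ?thesis .
    qed
    ultimately show "D \<in> (\<lambda>lam. hh ` set lam) ` QS m" by blast
  qed
qed

lemma q_star_DS: "q_star m = card (DS m)"
proof (cases "m < 0")
  case True then show ?thesis unfolding q_star_def using DS_neg by simp
next
  case False
  have "q_star m = card (QS (nat m))" unfolding q_star_def QS_def using False by simp
  also have "\<dots> = card (DS (int (nat m)))" by (rule bij_betw_same_card[OF QS_bij])
  finally show ?thesis using False by simp
qed



definition cc :: "nat \<Rightarrow> nat" where "cc m = card (DS (int m))"
definition wn :: "nat set \<Rightarrow> nat" where "wn S = (\<Sum>j\<in>S. 2 * j + 1)"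
definition DSN :: "nat \<Rightarrow> nat set set" where "DSN m = {S. finite S \<and> wn S = m}"

lemma DSN_bound: "S \<in> DSN m \<Longrightarrow> S \<subseteq> {..<m}"
proof
  fix j assume S: "S \<in> DSN m" and j: "j \<in> S"
  have "2 * j + 1 \<le> wn S" unfolding wn_def using S j unfolding DSN_def by (intro member_le_sum) auto
  then show "j \<in> {..<m}" using S unfolding DSN_def by simp
qed

lemma DSN_card: "card (DSN m) = cc m"
  unfolding cc_def
proof (rule bij_betw_same_card[of "\<lambda>S. int ` S"], rule bij_betw_imageI)
  show "inj_on ((`) int) (DSN m)" by (rule inj_onI) (simp add: inj_image_eq_iff)
  show "(`) int ` DSN m = DS (int m)"
  proof (rule set_eqI, rule iffI)
    fix D assume "D \<in> (`) int ` DSN m"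
    then obtain S where S: "S \<in> DSN m" "D = int ` S" by auto
    have "wt D = (\<Sum>j\<in>S. 2 * int j + 1)" unfolding S(2) wt_def
      by (rule sum.reindex_cong[where l=int]) (auto simp: inj_on_def)
    also have "\<dots> = int (wn S)" unfolding wn_def of_nat_sum by (rule sum.cong) auto
    finally show "D \<in> DS (int m)" using S unfolding DS_def DSN_def by auto
  next
    fix D assume D: "D \<in> DS (int m)"
    have Dpos: "D \<subseteq> {0..}" and fD: "finite D" and wD: "wt D = int m" using D unfolding DS_def by auto
    have DS: "D = int ` (nat ` D)" using Dpos by (force simp: image_image intro: image_eqI)
    have "int (wn (nat ` D)) = (\<Sum>j\<in>nat ` D. 2 * int j + 1)" unfolding wn_def of_nat_sum
      by (rule sum.cong) auto
    also have "\<dots> = wt D" unfolding wt_def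
      by (rule sum.reindex_cong[where l=int, symmetric]) (use DS in \<open>auto simp: inj_on_def\<close>)
    finally have "nat ` D \<in> DSN m" unfolding DSN_def using fD wD by simp
    then show "D \<in> (`) int ` DSN m" using DS by blast
  qed
qed

lemma finite_DSN: "finite (DSN m)"
  by (rule finite_subset[of _ "Pow {..<m}"]) (use DSN_bound in auto)

lemma cN_le: "card {S \<in> Pow {..<N}. wn S = m} \<le> cc m"
  unfolding DSN_card[symmetric]
  by (rule card_mono[OF finite_DSN]) (auto simp: DSN_def intro: finite_subset)

lemma cN_eq: "m < 2 * N + 1 \<Longrightarrow> card {S \<in> Pow {..<N}. wn S = m} = cc m"
  unfolding DSN_card[symmetric]
proof -
  assume m: "m < 2 * N + 1"
  have "{S \<in> Pow {..<N}. wn S = m} = DSN m"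
  proof (rule set_eqI, rule iffI)
    fix S assume "S \<in> {S \<in> Pow {..<N}. wn S = m}" then show "S \<in> DSN m"
      unfolding DSN_def by (auto intro: finite_subset)
  next
    fix S assume S: "S \<in> DSN m"
    have "S \<subseteq> {..<N}"
    proof
      fix j assume j: "j \<in> S"
      have "2 * j + 1 \<le> wn S" unfolding wn_def using S j unfolding DSN_def by (intro member_le_sum) auto
      then show "j \<in> {..<N}" using S m unfolding DSN_def by simp
    qed
    then show "S \<in> {S \<in> Pow {..<N}. wn S = m}" using S unfolding DSN_def by auto
  qed
  then show "card {S \<in> Pow {..<N}. wn S = m} = card (DSN m)" by simp
qed

lemma prod_expand:
  fixes q :: "'a :: comm_ring_1"
  shows "(\<Prod>j<N. 1 + q ^ (2 * j + 1)) = (\<Sum>S\<in>Pow {..<N}. q ^ wn S)"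
proof -
  have "(\<Prod>j<N. 1 + q ^ (2 * j + 1)) = (\<Prod>j<N. q ^ (2 * j + 1) + 1)" by (simp add: add.commute)
  also have "\<dots> = (\<Sum>X\<in>Pow {..<N}. (\<Prod>x\<in>X. q ^ (2 * x + 1)) * (\<Prod>x\<in>{..<N} - X. 1))"
    by (rule prod_add) simp
  also have "\<dots> = (\<Sum>S\<in>Pow {..<N}. q ^ wn S)"
    unfolding wn_def by (simp add: power_sum)
  finally show ?thesis .
qed

lemma wn_le: "S \<subseteq> {..<N} \<Longrightarrow> wn S \<le> N * N"
proof -
  assume S: "S \<subseteq> {..<N}"
  have "wn S \<le> wn {..<N}" unfolding wn_def by (rule sum_mono2) (use S in auto)
  also have "wn {..<N} = N * N" unfolding wn_def by (induction N) auto
  finally show ?thesis .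
qed

lemma prod_group:
  fixes q :: "'a :: comm_ring_1"
  assumes "N * N < M"
  shows "(\<Prod>j<N. 1 + q ^ (2 * j + 1)) = (\<Sum>m<M. of_nat (card {S \<in> Pow {..<N}. wn S = m}) * q ^ m)"
proof -
  have "(\<Prod>j<N. 1 + q ^ (2 * j + 1)) = (\<Sum>S\<in>Pow {..<N}. q ^ wn S)" by (rule prod_expand)
  also have "(\<Sum>S\<in>Pow {..<N}. q ^ wn S) = (\<Sum>m<M. \<Sum>S\<in>{S \<in> Pow {..<N}. wn S = m}. q ^ wn S)"
  proof (rule sum.group[symmetric])
    show "wn ` Pow {..<N} \<subseteq> {..<M}"
    proof
      fix x assume "x \<in> wn ` Pow {..<N}"
      then obtain S where "S \<subseteq> {..<N}" "x = wn S" by auto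
      then show "x \<in> {..<M}" using wn_le[of S N] assms by simp
    qed
  qed auto
  also have "\<dots> = (\<Sum>m<M. of_nat (card {S \<in> Pow {..<N}. wn S = m}) * q ^ m)"
    by (rule sum.cong[OF refl]) simp
  finally show ?thesis .
qed

lemma exp_prod_bound:
  fixes r :: real
  assumes "0 \<le> r" "r < 1"
  shows "(\<Prod>j<k. 1 + r ^ (2 * j + 1)) \<le> exp (1 / (1 - r))"
proof -
  have "(\<Prod>j<k. 1 + r ^ (2 * j + 1)) \<le> (\<Prod>j<k. exp (r ^ (2 * j + 1)))"
    by (rule prod_mono) (use assms in \<open>auto simp: add.commute exp_ge_add_one_self\<close>)
  also have "\<dots> = exp (\<Sum>j<k. r ^ (2 * j + 1))" by (simp add: exp_sum)
  also have "(\<Sum>j<k. r ^ (2 * j + 1)) \<le> (\<Sum>j<k. r ^ j)"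
  proof (rule sum_mono)
    fix j show "r ^ (2 * j + 1) \<le> r ^ j" by (rule power_decreasing) (use assms in auto)
  qed
  also have "(\<Sum>j<k. r ^ j) = (1 - r ^ k) / (1 - r)" using assms by (simp add: sum_gp_strict)
  also have "\<dots> \<le> 1 / (1 - r)" using assms by (intro divide_right_mono) auto
  finally show ?thesis by simp
qed

lemma cc_summable:
  fixes r :: real
  assumes "0 \<le> r" "r < 1"
  shows "summable (\<lambda>m. real (cc m) * r ^ m)"
proof (rule summableI_nonneg_bounded)
  show "0 \<le> real (cc m) * r ^ m" for m using assms by simp
  fix k :: nat
  define M where "M = k * k + k + 1"
  have "(\<Sum>m<k. real (cc m) * r ^ m) = (\<Sum>m<k. real (card {S \<in> Pow {..<k}. wn S = m}) * r ^ m)"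
  proof (rule sum.cong[OF refl])
    fix m assume "m \<in> {..<k}"
    then have "card {S \<in> Pow {..<k}. wn S = m} = cc m" by (intro cN_eq) simp
    then show "real (cc m) * r ^ m = real (card {S \<in> Pow {..<k}. wn S = m}) * r ^ m" by simp
  qed
  also have "\<dots> \<le> (\<Sum>m<M. real (card {S \<in> Pow {..<k}. wn S = m}) * r ^ m)"
    by (rule sum_mono2) (use assms M_def in auto)
  also have "\<dots> = (\<Prod>j<k. 1 + r ^ (2 * j + 1))" by (rule prod_group[symmetric]) (simp add: M_def)
  also have "\<dots> \<le> exp (1 / (1 - r))" by (rule exp_prod_bound[OF assms])
  finally show "(\<Sum>m<k. real (cc m) * r ^ m) \<le> exp (1 / (1 - r))" .
qed



lemma prod_tendsto:
  fixes q :: complex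
  assumes "norm q < 1"
  shows "(\<lambda>N. \<Prod>j<N. 1 + q ^ (2 * j + 1)) \<longlonglongrightarrow> (\<Sum>m. of_nat (cc m) * q ^ m)"
proof -
  define r where "r = norm q"
  have r0: "0 \<le> r" "r < 1" using assms r_def by auto
  have sr: "summable (\<lambda>m. real (cc m) * r ^ m)" by (rule cc_summable[OF r0])
  have nq: "norm (of_nat (cc m) * q ^ m) = real (cc m) * r ^ m" for m
    by (simp add: r_def norm_mult norm_power)
  have sq: "summable (\<lambda>m. of_nat (cc m) * q ^ m)"
    by (rule summable_norm_cancel) (simp add: nq sr)
  define C where "C = (\<Sum>m. real (cc m) * r ^ m)"
  define Cq where "Cq = (\<Sum>m. of_nat (cc m) * q ^ m)"
  define Sr where "Sr k = (\<Sum>m<k. real (cc m) * r ^ m)" for k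
  define Sq where "Sq k = (\<Sum>m<k. of_nat (cc m) * q ^ m)" for k
  have smo: "strict_mono (\<lambda>N::nat. 2 * N + 1)" by (rule strict_monoI) simp
  have "Sr \<longlonglongrightarrow> C" unfolding Sr_def C_def by (rule summable_LIMSEQ[OF sr])
  then have Sr_lim: "(\<lambda>N. Sr (2 * N + 1)) \<longlonglongrightarrow> C"
    using LIMSEQ_subseq_LIMSEQ[OF _ smo] by (simp add: o_def)
  have "Sq \<longlonglongrightarrow> Cq" unfolding Sq_def Cq_def by (rule summable_LIMSEQ[OF sq])
  then have Sq_lim: "(\<lambda>N. Sq (2 * N + 1)) \<longlonglongrightarrow> Cq"
    using LIMSEQ_subseq_LIMSEQ[OF _ smo] by (simp add: o_def)
  have bound: "norm ((\<Prod>j<N. 1 + q ^ (2 * j + 1)) - Sq (2 * N + 1)) \<le> C - Sr (2 * N + 1)" for N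
  proof -
    define M where "M = N * N + 2 * N + 2"
    define cN where "cN m = card {S \<in> Pow {..<N}. wn S = m}" for m
    have "(\<Prod>j<N. 1 + q ^ (2 * j + 1)) = (\<Sum>m<M. of_nat (cN m) * q ^ m)"
      unfolding cN_def by (rule prod_group) (simp add: M_def)
    also have "\<dots> = (\<Sum>m\<in>{..<2 * N + 1} \<union> {2 * N + 1..<M}. of_nat (cN m) * q ^ m)"
    proof -
      have "{..<M} = {..<2 * N + 1} \<union> {2 * N + 1..<M}" unfolding M_def by auto
      then show ?thesis by (simp only:)
    qed
    also have "\<dots> = (\<Sum>m<2 * N + 1. of_nat (cN m) * q ^ m) + (\<Sum>m\<in>{2 * N + 1..<M}. of_nat (cN m) * q ^ m)"
      by (rule sum.union_disjoint) auto
    also have "(\<Sum>m<2 * N + 1. of_nat (cN m) * q ^ m) = Sq (2 * N + 1)"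
      unfolding Sq_def
    proof (rule sum.cong[OF refl])
      fix m assume "m \<in> {..<2 * N + 1}"
      then have "cN m = cc m" unfolding cN_def by (intro cN_eq) simp
      then show "of_nat (cN m) * q ^ m = of_nat (cc m) * q ^ m" by simp
    qed
    finally have eq: "(\<Prod>j<N. 1 + q ^ (2 * j + 1)) - Sq (2 * N + 1) = (\<Sum>m\<in>{2 * N + 1..<M}. of_nat (cN m) * q ^ m)"
      by simp
    have "norm (\<Sum>m\<in>{2 * N + 1..<M}. of_nat (cN m) * q ^ m) \<le> (\<Sum>m\<in>{2 * N + 1..<M}. norm (of_nat (cN m) * q ^ m))"
      by (rule norm_sum)
    also have "\<dots> \<le> (\<Sum>m\<in>{2 * N + 1..<M}. real (cc m) * r ^ m)"
    proof (rule sum_mono)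
      fix m
      have "norm (of_nat (cN m) * q ^ m) = real (cN m) * r ^ m" by (simp add: r_def norm_mult norm_power)
      also have "\<dots> \<le> real (cc m) * r ^ m" using cN_le[of N m] r0 unfolding cN_def by (intro mult_right_mono) auto
      finally show "norm (of_nat (cN m) * q ^ m) \<le> real (cc m) * r ^ m" .
    qed
    also have "\<dots> = Sr M - Sr (2 * N + 1)"
    proof -
      have "{..<M} = {..<2 * N + 1} \<union> {2 * N + 1..<M}" unfolding M_def by auto
      then have "Sr M = (\<Sum>m\<in>{..<2 * N + 1} \<union> {2 * N + 1..<M}. real (cc m) * r ^ m)"
        unfolding Sr_def by (simp only:)
      also have "\<dots> = Sr (2 * N + 1) + (\<Sum>m\<in>{2 * N + 1..<M}. real (cc m) * r ^ m)"
        unfolding Sr_def by (rule sum.union_disjoint) auto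
      finally have "Sr M = Sr (2 * N + 1) + (\<Sum>m\<in>{2 * N + 1..<M}. real (cc m) * r ^ m)" .
      then show ?thesis by simp
    qed
    also have "Sr M \<le> C" unfolding Sr_def C_def by (rule sum_le_suminf[OF sr]) (use r0 in auto)
    finally show ?thesis using eq by simp
  qed
  have g0: "(\<lambda>N. (C - Sr (2 * N + 1)) + norm (Sq (2 * N + 1) - Cq)) \<longlonglongrightarrow> 0"
  proof -
    have "(\<lambda>N. C - Sr (2 * N + 1)) \<longlonglongrightarrow> C - C" by (intro tendsto_diff tendsto_const Sr_lim)
    moreover have "(\<lambda>N. norm (Sq (2 * N + 1) - Cq)) \<longlonglongrightarrow> 0"
      using Sq_lim by (intro tendsto_norm_zero) (simp add: LIM_zero)
    ultimately show ?thesis using tendsto_add[of _ 0 _ _ 0] by simp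
  qed
  have "(\<lambda>N. (\<Prod>j<N. 1 + q ^ (2 * j + 1)) - Cq) \<longlonglongrightarrow> 0"
  proof (rule Lim_null_comparison[OF _ g0], rule always_eventually, rule allI)
    fix N
    have "norm ((\<Prod>j<N. 1 + q ^ (2 * j + 1)) - Cq) \<le> norm ((\<Prod>j<N. 1 + q ^ (2 * j + 1)) - Sq (2 * N + 1)) + norm (Sq (2 * N + 1) - Cq)"
      by (rule norm_diff_triangle_le[where y="Sq (2 * N + 1)"]) (rule order_refl)+
    also have "\<dots> \<le> (C - Sr (2 * N + 1)) + norm (Sq (2 * N + 1) - Cq)" using bound[of N] by simp
    finally show "norm ((\<Prod>j<N. 1 + q ^ (2 * j + 1)) - Cq) \<le> (C - Sr (2 * N + 1)) + norm (Sq (2 * N + 1) - Cq)" .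
  qed
  then show ?thesis unfolding Cq_def by (rule LIM_zero_cancel)
qed

lemma cc_sums:
  fixes q :: complex
  assumes "norm q < 1"
  shows "(\<lambda>m. of_nat (cc m) * q ^ m) sums (\<Prod>j. 1 + q ^ (2 * j + 1))"
proof -
  define r where "r = norm q"
  have r0: "0 \<le> r" "r < 1" using assms r_def by auto
  have sq: "summable (\<lambda>m. of_nat (cc m) * q ^ m)"
    by (rule summable_norm_cancel) (simp add: norm_mult norm_power cc_summable[OF r0, unfolded r_def])
  have sg: "summable (\<lambda>i. r * (r ^ 2) ^ i)"
    by (intro summable_mult summable_geometric) (use r0 in \<open>simp add: power_less_one_iff\<close>)
  have eqn: "\<And>i. norm ((1 + q ^ (2 * i + 1)) - 1) = r * (r ^ 2) ^ i"
    by (simp add: r_def norm_power norm_mult power_mult[symmetric])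
  have "summable (\<lambda>i. norm ((1 + q ^ (2 * i + 1)) - 1))"
    using sg by (simp only: eqn)
  then have cp: "convergent_prod (\<lambda>j. 1 + q ^ (2 * j + 1))"
    by (intro abs_convergent_prod_imp_convergent_prod summable_imp_abs_convergent_prod)
  have L1: "(\<lambda>n. \<Prod>i\<le>n. 1 + q ^ (2 * i + 1)) \<longlonglongrightarrow> (\<Prod>j. 1 + q ^ (2 * j + 1))"
    by (rule convergent_prod_LIMSEQ[OF cp])
  have "(\<lambda>n. \<Prod>i<Suc n. 1 + q ^ (2 * i + 1)) \<longlonglongrightarrow> (\<Sum>m. of_nat (cc m) * q ^ m)"
    using prod_tendsto[OF assms] by (rule LIMSEQ_Suc)
  then have L2: "(\<lambda>n. \<Prod>i\<le>n. 1 + q ^ (2 * i + 1)) \<longlonglongrightarrow> (\<Sum>m. of_nat (cc m) * q ^ m)"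
    by (simp add: lessThan_Suc_atMost)
  have "(\<Prod>j. 1 + q ^ (2 * j + 1)) = (\<Sum>m. of_nat (cc m) * q ^ m)" using LIMSEQ_unique[OF L1 L2] .
  then show ?thesis using summable_sums[OF sq] by simp
qed



lemma conv_reindex:
  assumes "0 < t"
  shows "(\<Sum>i\<le>k. if 0 < i \<and> 2 * t dvd i then cc (k - i) else 0)
       = (\<Sum>j=1..k. card (DS (int k - 2 * int t * int j)))"
proof -
  define J where "J = {j \<in> {1..k}. 2 * t * j \<le> k}"
  have "(\<Sum>j=1..k. card (DS (int k - 2 * int t * int j))) = (\<Sum>j\<in>{1..k}. if 2 * t * j \<le> k then cc (k - 2 * t * j) else 0)"
  proof (rule sum.cong[OF refl])
    fix j assume "j \<in> {1..k}"
    show "card (DS (int k - 2 * int t * int j)) = (if 2 * t * j \<le> k then cc (k - 2 * t * j) else 0)"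
    proof (cases "2 * t * j \<le> k")
      case True
      then have "int k - 2 * int t * int j = int (k - 2 * t * j)" by (simp add: of_nat_diff)
      then show ?thesis using True unfolding cc_def by simp
    next
      case False
      then have "k < 2 * t * j" by simp
      then have "int k < int (2 * t * j)" by (simp only: of_nat_less_iff)
      then have "int k - 2 * int t * int j < 0" by simp
      then show ?thesis using False DS_neg by simp
    qed
  qed
  also have "\<dots> = (\<Sum>j\<in>J. cc (k - 2 * t * j))"
    unfolding J_def by (simp add: sum.If_cases Int_def)
  also have "\<dots> = (\<Sum>i\<in>(\<lambda>j. 2 * t * j) ` J. cc (k - i))"
    by (rule sum.reindex[symmetric, unfolded o_def]) (use assms in \<open>auto simp: inj_on_def\<close>)
  also have "(\<lambda>j. 2 * t * j) ` J = {i \<in> {..k}. 0 < i \<and> 2 * t dvd i}"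
  proof (rule set_eqI, rule iffI)
    fix i assume "i \<in> (\<lambda>j. 2 * t * j) ` J"
    then obtain j where "j \<in> J" "i = 2 * t * j" by auto
    then show "i \<in> {i \<in> {..k}. 0 < i \<and> 2 * t dvd i}" using assms unfolding J_def by auto
  next
    fix i assume i: "i \<in> {i \<in> {..k}. 0 < i \<and> 2 * t dvd i}"
    then obtain d where d: "i = 2 * t * d" by auto
    then have "0 < d" using i by auto
    moreover have "d \<le> k"
    proof -
      have "1 \<le> 2 * t" using assms by simp
      then have "d * 1 \<le> d * (2 * t)" by (rule mult_le_mono2)
      then have "d \<le> i" using d by (simp add: mult.commute)
      then show ?thesis using i by simp
    qed
    ultimately have "d \<in> J" unfolding J_def using i d by auto
    then show "i \<in> (\<lambda>j. 2 * t * j) ` J" using d by blast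
  qed
  also have "(\<Sum>i\<in>{i \<in> {..k}. 0 < i \<and> 2 * t dvd i}. cc (k - i)) = (\<Sum>i\<le>k. if 0 < i \<and> 2 * t dvd i then cc (k - i) else 0)"
    by (simp add: sum.If_cases Int_def)
  finally show ?thesis by simp
qed

lemma e_sums:
  fixes q :: complex
  assumes "norm q < 1" "0 < t"
  shows "(\<lambda>i. (if 0 < i \<and> 2 * t dvd i then 1 else 0) * q ^ i) sums (q ^ (2 * t) / (1 - q ^ (2 * t)))"
proof -
  define f where "f i = (if 0 < i \<and> 2 * t dvd i then 1 else 0) * q ^ i" for i
  define g where "g j = 2 * t * (j + 1)" for j
  have sm: "strict_mono g" unfolding g_def by (rule strict_monoI) (use assms in auto)
  have z: "f n = 0" if "n \<notin> range g" for n
  proof (rule ccontr)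
    assume "f n \<noteq> 0"
    then have "0 < n" "2 * t dvd n" unfolding f_def by (auto split: if_splits)
    then obtain d where d: "n = 2 * t * d" by auto
    then have "0 < d" using \<open>0 < n\<close> by auto
    then have "n = g (d - 1)" unfolding g_def d by simp
    then show False using that by auto
  qed
  have fg: "f (g j) = q ^ (2 * t) * (q ^ (2 * t)) ^ j" for j
    unfolding f_def g_def using assms by (simp add: power_mult[symmetric] power_add[symmetric] algebra_simps)
  have nq: "norm (q ^ (2 * t)) < 1" using assms by (simp add: norm_power power_less_one_iff)
  have "(\<lambda>j. q ^ (2 * t) * (q ^ (2 * t)) ^ j) sums (q ^ (2 * t) * (1 / (1 - q ^ (2 * t))))"
    by (intro sums_mult geometric_sums nq)
  then have "(\<lambda>j. f (g j)) sums (q ^ (2 * t) / (1 - q ^ (2 * t)))" unfolding fg by simp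
  then show ?thesis using sums_mono_reindex[OF sm, of f] z unfolding f_def by blast
qed

theorem theorem1p2:
  fixes t :: nat
  assumes "t > 0" and "even t"
  shows "(\<forall>q::complex. norm q < 1 \<longrightarrow>
           (\<lambda>n. of_nat (a_star t (Suc n)) * q ^ Suc n) sums
             (of_nat t * (q ^ (2 * t) * (\<Prod>j. 1 + q ^ (2 * j + 1))) / (1 - q ^ (2 * t)))) \<and>
         (\<forall>n::nat. n \<ge> 1 \<longrightarrow>
           a_star t n = t * (\<Sum>j=1..n. sc (int n - 2 * int t * int j)) \<and>
           a_star t n = t * (\<Sum>j=1..n. q_star (int n - 2 * int t * int j)))"
proof (intro conjI allI impI)
  fix n :: nat assume n: "n \<ge> 1"
  show "a_star t n = t * (\<Sum>j=1..n. sc (int n - 2 * int t * int j))"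
    using a_star_formula[OF assms(2,1) n] by (simp add: sc_DS)
  show "a_star t n = t * (\<Sum>j=1..n. q_star (int n - 2 * int t * int j))"
    using a_star_formula[OF assms(2,1) n] by (simp add: q_star_DS)
next
  fix q :: complex assume q: "norm q < 1"
  define e where "e i = (if 0 < i \<and> 2 * t dvd i then 1 else 0 :: complex)" for i
  define a where "a i = e i * q ^ i" for i
  define b where "b i = of_nat (cc i) * q ^ i" for i
  define r where "r = norm q"
  have r0: "0 \<le> r" "r < 1" using q r_def by auto
  have sa: "summable (\<lambda>k. norm (a k))"
  proof (rule summable_comparison_test)
    show "\<exists>N. \<forall>n\<ge>N. norm (norm (a n)) \<le> r ^ n"
      by (intro exI allI impI) (simp add: a_def e_def r_def norm_mult norm_power)
    show "summable (\<lambda>n. r ^ n)" using r0 by (intro summable_geometric) simp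
  qed
  have sb: "summable (\<lambda>k. norm (b k))"
    unfolding b_def using cc_summable[OF r0] by (simp add: norm_mult norm_power r_def)
  have ea: "a sums (q ^ (2 * t) / (1 - q ^ (2 * t)))"
    unfolding a_def e_def using e_sums[OF q assms(1)] by simp
  have eb: "b sums (\<Prod>j. 1 + q ^ (2 * j + 1))" unfolding b_def by (rule cc_sums[OF q])
  have CP: "(\<lambda>k. \<Sum>i\<le>k. a i * b (k - i)) sums ((\<Sum>k. a k) * (\<Sum>k. b k))"
    by (rule Cauchy_product_sums[OF sa sb])
  define T where "T = (q ^ (2 * t) / (1 - q ^ (2 * t))) * (\<Prod>j. 1 + q ^ (2 * j + 1))"
  have CP': "(\<lambda>k. \<Sum>i\<le>k. a i * b (k - i)) sums T"
    using CP unfolding T_def sums_unique[OF ea, symmetric] sums_unique[OF eb, symmetric] .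
  have trm: "(\<Sum>i\<le>k. a i * b (k - i)) = of_nat (\<Sum>i\<le>k. if 0 < i \<and> 2 * t dvd i then cc (k - i) else 0) * q ^ k" for k
  proof -
    have "(\<Sum>i\<le>k. a i * b (k - i)) = (\<Sum>i\<le>k. of_nat (if 0 < i \<and> 2 * t dvd i then cc (k - i) else 0) * q ^ k)"
    proof (rule sum.cong[OF refl])
      fix i assume "i \<in> {..k}"
      then have "q ^ i * q ^ (k - i) = q ^ k" by (simp add: power_add[symmetric])
      then show "a i * b (k - i) = of_nat (if 0 < i \<and> 2 * t dvd i then cc (k - i) else 0) * q ^ k"
        unfolding a_def b_def e_def by (auto simp: algebra_simps)
    qed
    also have "\<dots> = of_nat (\<Sum>i\<le>k. if 0 < i \<and> 2 * t dvd i then cc (k - i) else 0) * q ^ k"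
      by (simp add: sum_distrib_right)
    finally show ?thesis .
  qed
  define F where "F k = of_nat t * (\<Sum>i\<le>k. a i * b (k - i))" for k
  have FS: "F sums (of_nat t * T)" unfolding F_def by (rule sums_mult[OF CP'])
  have F0: "F 0 = 0" unfolding F_def a_def e_def by simp
  have "(\<lambda>n. F (Suc n)) sums (of_nat t * T)" using FS F0 by (simp add: sums_Suc_iff)
  moreover have "F (Suc n) = of_nat (a_star t (Suc n)) * q ^ Suc n" for n
  proof -
    have "a_star t (Suc n) = t * (\<Sum>i\<le>Suc n. if 0 < i \<and> 2 * t dvd i then cc (Suc n - i) else 0)"
      using a_star_formula[OF assms(2,1), of "Suc n"] conv_reindex[OF assms(1), of "Suc n"] by simp
    then show ?thesis unfolding F_def trm by simp
  qed
  ultimately have "(\<lambda>n. of_nat (a_star t (Suc n)) * q ^ Suc n) sums (of_nat t * T)" by simp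
  moreover have "of_nat t * T = of_nat t * (q ^ (2 * t) * (\<Prod>j. 1 + q ^ (2 * j + 1))) / (1 - q ^ (2 * t))"
    unfolding T_def by simp
  ultimately show "(\<lambda>n. of_nat (a_star t (Suc n)) * q ^ Suc n) sums
             (of_nat t * (q ^ (2 * t) * (\<Prod>j. 1 + q ^ (2 * j + 1))) / (1 - q ^ (2 * t)))" by simp
qed


end
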